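(* Assume the positive sequence $\alpha(n)$ is log-polynomial of some degree $m\ge2$ with data $\{A(n),\kappa,\delta(n)\}$. (i) If $\kappa=-1$, then $\alpha$ is asymptotically strictly log-concave. If $\kappa=1$, then $\alpha$ is asymptotically strictly log-convex. (ii) Fix $d$ with $1\le d\le m+1$. For all sufficiently large $n$, the zeros of $J_\alpha^{d,n}(X)$ and of $K_\alpha^{d,n}(X)$ are all distinct. If $\kappa=-1$, they are all real. If $\kappa=1$, they are all non-real, except for exactly one real zero when $d$ is odd.
   Context: Log-polynomial: let $m\ge2$ be an integer and $\kappa\in\{1,-1\}$. A sequence of positive reals $\alpha(n)$ is log-polynomial of degree $m$ with data $\{A(n),\kappa,\delta(n)\}$ if there are real sequences $A(n),\delta(n),g_k(n)$ ($3\le k\le m$) such that $$\log\left(\frac{\alpha(n+j)}{\alpha(n)}\right)=A(n)j+\kappa\delta(n)^2j^2+\sum_{k=3}^m g_k(n)j^k+o(\delta(n)^{m+1})\quad(n\to\infty)$$ for $j=1,\dots,m+1$. In addition, $\delta(n)>0$, $\delta(n)\to0$ and $g_k(n)=o(\delta(n)^k)$. Jensen polynomials: $J_\alpha^{d,n}(X)=\sum_{j=0}^d\binom{d}{j}\alpha(n+j)X^j$ and $K_\alpha^{d,n}(X)=X^dJ_\alpha^{d,n}(1/X)$. Asymptotically strictly log-concave means $\alpha(n+1)^2>\alpha(n)\alpha(n+2)$ for all large $n$. Asymptotically strictly log-convex means the reverse strict inequality holds for all large $n$. *)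

theory Defs
  imports "HOL-Analysis.Analysis" "HOL-Library.Landau_Symbols"
    "HOL-Computational_Algebra.Polynomial"
begin

definition log_polynomial ::
  "(nat \<Rightarrow> real) \<Rightarrow> nat \<Rightarrow> (nat \<Rightarrow> real) \<Rightarrow> real \<Rightarrow> (nat \<Rightarrow> real) \<Rightarrow> bool" where
  "log_polynomial \<alpha> m A \<kappa> \<delta> \<longleftrightarrow>
     m \<ge> 2 \<and> \<kappa> \<in> {1, -1} \<and> (\<forall>n. \<alpha> n > 0) \<and>
     (\<forall>n. \<delta> n > 0) \<and> \<delta> \<longlonglongrightarrow> 0 \<and>
     (\<exists>g :: nat \<Rightarrow> nat \<Rightarrow> real.
        (\<forall>k\<in>{3..m}. g k \<in> o[sequentially](\<lambda>n. \<delta> n ^ k)) \<and>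
        (\<forall>j\<in>{1..m+1}.
           (\<lambda>n. ln (\<alpha> (n + j) / \<alpha> n)
                 - (A n * real j + \<kappa> * \<delta> n ^ 2 * real j ^ 2
                    + (\<Sum>k=3..m. g k n * real j ^ k)))
           \<in> o[sequentially](\<lambda>n. \<delta> n ^ (m + 1))))"

definition jensen_J :: "(nat \<Rightarrow> real) \<Rightarrow> nat \<Rightarrow> nat \<Rightarrow> real poly" where
  "jensen_J \<alpha> d n = (\<Sum>j\<le>d. monom (real (d choose j) * \<alpha> (n + j)) j)"

definition jensen_K :: "(nat \<Rightarrow> real) \<Rightarrow> nat \<Rightarrow> nat \<Rightarrow> real poly" where
  "jensen_K \<alpha> d n = (\<Sum>j\<le>d. monom (real (d choose j) * \<alpha> (n + j)) (d - j))"

end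

theory Submission
  imports Defs "HOL-Computational_Algebra.Fundamental_Theorem_Algebra"
begin
lemma rsquarefree_card:
  fixes p :: "complex poly"
  assumes "p \<noteq> 0" "card {z. poly p z = 0} = degree p"
  shows "rsquarefree p"
proof -
  let ?R = "{z. poly p z = 0}"
  have fin: "finite ?R" using assms(1) poly_roots_finite by blast
  have s: "(\<Sum>x\<in>?R. order x p) \<le> (\<Sum>x\<in>?R. 1)"
    using sum_order_le_degree[OF assms(1)] assms(2) by simp
  have ge: "1 \<le> order x p" if "x \<in> ?R" for x
  proof -
    have "order x p \<noteq> 0" using that assms(1) by (simp add: order_root)
    then show ?thesis by simp
  qed
  have "\<forall>x\<in>?R. order x p = 1"
  proof (rule ccontr)
    assume "\<not> ?thesis"
    then obtain x where x: "x \<in> ?R" "order x p \<noteq> 1" by blast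
    then have "1 < order x p" using ge by force
    then have gt: "1 < order x p" .
    have "(\<Sum>x\<in>?R. 1) < (\<Sum>x\<in>?R. order x p)"
      by (rule sum_strict_mono_ex1[OF fin]) (use x gt ge in auto)
    then show False using s by simp
  qed
  then show ?thesis unfolding rsquarefree_def using assms(1)
    by (auto simp: order_root)
qed

abbreviation cpoly :: "real poly \<Rightarrow> complex poly" where
  "cpoly p \<equiv> map_poly complex_of_real p"

lemma cdeg [simp]: "degree (cpoly p) = degree p"
  by (rule degree_map_poly) simp

lemma ccoeff [simp]: "coeff (cpoly p) n = complex_of_real (coeff p n)"
  by (simp add: coeff_map_poly)

lemma cpoly_cnj: "poly (cpoly p) (cnj z) = cnj (poly (cpoly p) z)"
  by (subst poly_cnj_real) auto

lemma cpoly_eq0 [simp]: "cpoly p = 0 \<longleftrightarrow> p = 0"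
  by (metis cdeg ccoeff leading_coeff_0_iff of_real_eq_0_iff)

lemma poly_sumN:
  fixes p :: "'a::comm_ring_1 poly"
  assumes "degree p \<le> N"
  shows "poly p x = (\<Sum>i\<le>N. coeff p i * x ^ i)"
proof -
  have "poly p x = poly (\<Sum>i\<le>N. monom (coeff p i) i) x"
    using poly_as_sum_of_monoms'[OF assms] by simp
  also have "\<dots> = (\<Sum>i\<le>N. coeff p i * x ^ i)"
    by (simp add: poly_sum poly_monom mult.commute)
  finally show ?thesis .
qed

lemma root_near:
  fixes p :: "complex poly" and z :: complex and e :: real
  assumes "p \<noteq> 0" "e > 0" "norm (poly p z) < norm (lead_coeff p) * e ^ degree p"
  shows "\<exists>w. poly p w = 0 \<and> norm (w - z) < e"
proof (rule ccontr)
  assume H: "\<not> ?thesis"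
  obtain r where r: "smult (lead_coeff p) (\<Prod>i<degree p. [:-r i, 1:]) = p"
    using complex_poly_decompose' by blast
  have rootr: "poly p (r i) = 0" if "i < degree p" for i
  proof -
    have "poly p (r i) = lead_coeff p * (\<Prod>j<degree p. (r i - r j))"
      by (subst r[symmetric]) (simp add: poly_prod)
    also have "(\<Prod>j<degree p. (r i - r j)) = 0" using that by (intro prod_zero) auto
    then have "lead_coeff p * (\<Prod>j<degree p. (r i - r j)) = 0" by simp
    finally show ?thesis .
  qed
  have ge: "e \<le> norm (z - r i)" if "i < degree p" for i
    using H rootr[OF that] by (metis linorder_not_le norm_minus_commute)
  have "poly p z = lead_coeff p * (\<Prod>j<degree p. (z - r j))"
    by (subst r[symmetric]) (simp add: poly_prod)
  then have "norm (poly p z) = norm (lead_coeff p) * (\<Prod>j<degree p. norm (z - r j))"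
    by (simp add: norm_mult prod_norm)
  moreover have "e ^ degree p \<le> (\<Prod>j<degree p. norm (z - r j))"
  proof -
    have "(\<Prod>j<degree p. e) \<le> (\<Prod>j<degree p. norm (z - r j))"
      by (rule prod_mono) (use ge assms(2) in auto)
    then show ?thesis by simp
  qed
  ultimately have "norm (lead_coeff p) * e ^ degree p \<le> norm (poly p z)"
    by (simp add: mult_left_mono)
  then show False using assms(3) by simp
qed

lemma eps_exists:
  fixes R :: "complex set"
  assumes "finite R"
  shows "\<exists>e>0. (\<forall>z\<in>R. \<forall>z'\<in>R. z \<noteq> z' \<longrightarrow> 2 * e \<le> norm (z - z')) \<and>
              (\<forall>z\<in>R. Im z \<noteq> 0 \<longrightarrow> e \<le> \<bar>Im z\<bar>)"
proof -
  define S where "S = insert 1 ((\<lambda>(z,z'). norm (z - z') / 2) ` {(z,z'). z \<in> R \<and> z' \<in> R \<and> z \<noteq> z'}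
                     \<union> (\<lambda>z. \<bar>Im z\<bar>) ` {z\<in>R. Im z \<noteq> 0})"
  have fin: "finite S" unfolding S_def using assms
    by (intro finite_insert[THEN iffD2] finite_UnI finite_imageI) (auto intro: finite_subset[of _ "R \<times> R"])
  have pos: "\<forall>x\<in>S. x > 0" unfolding S_def by auto
  define e where "e = Min S"
  have "e \<in> S" unfolding e_def using fin by (intro Min_in) (auto simp: S_def)
  then have "e > 0" using pos by auto
  moreover have "\<forall>z\<in>R. \<forall>z'\<in>R. z \<noteq> z' \<longrightarrow> 2 * e \<le> norm (z - z')"
  proof (intro ballI impI)
    fix z z' assume "z \<in> R" "z' \<in> R" "z \<noteq> z'"
    then have "norm (z - z') / 2 \<in> S" unfolding S_def by force
    then have "e \<le> norm (z - z') / 2" unfolding e_def using fin by (meson Min_le)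
    then show "2 * e \<le> norm (z - z')" by simp
  qed
  moreover have "\<forall>z\<in>R. Im z \<noteq> 0 \<longrightarrow> e \<le> \<bar>Im z\<bar>"
  proof (intro ballI impI)
    fix z assume "z \<in> R" "Im z \<noteq> 0"
    then have "\<bar>Im z\<bar> \<in> S" unfolding S_def by force
    then show "e \<le> \<bar>Im z\<bar>" unfolding e_def using fin by (meson Min_le)
  qed
  ultimately show ?thesis by blast
qed

lemma tendsto_poly_coeffs:
  fixes F :: "nat \<Rightarrow> real poly"
  assumes degF: "\<And>n. degree (F n) \<le> N" and degQ: "degree Q \<le> N"
    and lim: "\<And>k. (\<lambda>n. coeff (F n) k) \<longlonglongrightarrow> coeff Q k"
  shows "(\<lambda>n. poly (cpoly (F n)) z) \<longlonglongrightarrow> poly (cpoly Q) z"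
proof -
  have "(\<lambda>n. \<Sum>i\<le>N. complex_of_real (coeff (F n) i) * z ^ i) \<longlonglongrightarrow> (\<Sum>i\<le>N. complex_of_real (coeff Q i) * z ^ i)"
    by (intro tendsto_intros lim)
  moreover have "poly (cpoly (F n)) z = (\<Sum>i\<le>N. complex_of_real (coeff (F n) i) * z ^ i)" for n
    by (subst poly_sumN[of _ N]) (use degF in auto)
  moreover have "poly (cpoly Q) z = (\<Sum>i\<le>N. complex_of_real (coeff Q i) * z ^ i)"
    by (subst poly_sumN[of _ N]) (use degQ in auto)
  ultimately show ?thesis by simp
qed

lemma root_perturb:
  fixes Q :: "real poly" and F :: "nat \<Rightarrow> real poly" and d :: nat
  assumes degQ: "degree Q = d" and d: "d \<ge> 1"
    and cardQ: "card {z. poly (cpoly Q) z = 0} = d"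
    and degF: "\<And>n. degree (F n) \<le> d"
    and lim: "\<And>k. (\<lambda>n. coeff (F n) k) \<longlonglongrightarrow> coeff Q k"
  shows "\<forall>\<^sub>F n in sequentially. F n \<noteq> 0 \<and> degree (F n) = d
      \<and> card {z. poly (cpoly (F n)) z = 0} = d
      \<and> card {z. poly (cpoly (F n)) z = 0 \<and> z \<in> \<real>} = card {z. poly (cpoly Q) z = 0 \<and> z \<in> \<real>}
      \<and> ((\<forall>z. poly (cpoly Q) z = 0 \<longrightarrow> z \<in> \<real>) \<longrightarrow> (\<forall>z. poly (cpoly (F n)) z = 0 \<longrightarrow> z \<in> \<real>))"
proof -
  let ?R = "{z. poly (cpoly Q) z = 0}"
  have Q0: "Q \<noteq> 0" using degQ d by auto
  have finR: "finite ?R" using Q0 poly_roots_finite[of "cpoly Q"] by simp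
  obtain e where e: "e > 0" "\<forall>z\<in>?R. \<forall>z'\<in>?R. z \<noteq> z' \<longrightarrow> 2 * e \<le> norm (z - z')"
    "\<forall>z\<in>?R. Im z \<noteq> 0 \<longrightarrow> e \<le> \<bar>Im z\<bar>"
    using eps_exists[OF finR] by blast
  have lc: "coeff Q d \<noteq> 0" using degQ Q0 by auto
  have ev1: "\<forall>\<^sub>F n in sequentially. coeff (F n) d \<noteq> 0"
    using lim[of d] lc tendsto_imp_eventually_ne by blast
  have ev2: "\<forall>\<^sub>F n in sequentially. \<forall>z\<in>?R. norm (poly (cpoly (F n)) z) < \<bar>coeff (F n) d\<bar> * e ^ d"
  proof (rule eventually_ball_finite[OF finR], intro ballI)
    fix z assume z: "z \<in> ?R"
    have "(\<lambda>n. \<bar>coeff (F n) d\<bar> * e ^ d - norm (poly (cpoly (F n)) z)) \<longlonglongrightarrow>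
          \<bar>coeff Q d\<bar> * e ^ d - norm (poly (cpoly Q) z)"
      by (intro tendsto_intros lim tendsto_poly_coeffs[of _ d]) (use degF degQ in auto)
    moreover have "\<bar>coeff Q d\<bar> * e ^ d - norm (poly (cpoly Q) z) > 0"
      using z lc e(1) by simp
    ultimately have "\<forall>\<^sub>F n in sequentially. \<bar>coeff (F n) d\<bar> * e ^ d - norm (poly (cpoly (F n)) z) > 0"
      by (rule order_tendstoD)
    then show "\<forall>\<^sub>F n in sequentially. norm (poly (cpoly (F n)) z) < \<bar>coeff (F n) d\<bar> * e ^ d"
      by eventually_elim simp
  qed
  show ?thesis
    using ev1 ev2
  proof eventually_elim
    case (elim n)
    let ?P = "cpoly (F n)"
    let ?S = "{z. poly ?P z = 0}"
    have degFn: "degree (F n) = d" using elim(1) degF[of n] le_degree by (metis antisym)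
    have Fn0: "F n \<noteq> 0" using elim(1) by auto
    have P0: "?P \<noteq> 0" using Fn0 by simp
    have lcP: "lead_coeff ?P = complex_of_real (coeff (F n) d)" using degFn by simp
    have ex: "\<exists>w. poly ?P w = 0 \<and> norm (w - z) < e" if "z \<in> ?R" for z
      by (rule root_near[OF P0 e(1)]) (use elim(2) that degFn lcP in auto)
    define w where "w z = (SOME w. poly ?P w = 0 \<and> norm (w - z) < e)" for z
    have w: "poly ?P (w z) = 0 \<and> norm (w z - z) < e" if "z \<in> ?R" for z
      unfolding w_def using someI_ex[OF ex[OF that]] .
    have close: "z = z'" if "z \<in> ?R" "z' \<in> ?R" "norm (x - z) < e" "norm (x - z') < e" for x z z'
    proof (rule ccontr)
      assume "z \<noteq> z'"
      then have "2 * e \<le> norm (z - z')" using e(2) that by blast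
      moreover have "norm (z - z') \<le> norm (x - z) + norm (x - z')"
        by (metis norm_diff_triangle_le norm_minus_commute order_refl)
      ultimately show False using that by simp
    qed
    have inj: "inj_on w ?R"
      by (rule inj_onI) (metis close w)
    have sub: "w ` ?R \<subseteq> ?S" using w by auto
    have finS: "finite ?S" using poly_roots_finite[OF P0] .
    have cardS: "card ?S \<le> d" using card_poly_roots_bound[OF P0] degFn by simp
    have "card (w ` ?R) = d" using card_image[OF inj] cardQ by simp
    then have Seq: "?S = w ` ?R"
      using card_subset_eq[OF finS sub] cardS card_mono[OF finS sub] by simp
    have realw: "w z \<in> \<real> \<longleftrightarrow> z \<in> \<real>" if z: "z \<in> ?R" for z
    proof
      assume "z \<in> \<real>"
      have "poly ?P (cnj (w z)) = 0" using w[OF z] by (simp add: cpoly_cnj)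
      then obtain z' where z': "z' \<in> ?R" "cnj (w z) = w z'" using Seq by blast
      have "norm (cnj (w z) - z) = norm (w z - z)"
        using \<open>z \<in> \<real>\<close> by (metis Reals_cnj_iff complex_cnj_diff complex_mod_cnj)
      then have "norm (w z' - z) < e" using w[OF z] z' by simp
      then have "z = z'" using close[OF z z'(1)] w[OF z'(1)] by blast
      then have "cnj (w z) = w z" using z' by simp
      then show "w z \<in> \<real>" by (simp add: Reals_cnj_iff)
    next
      assume wr: "w z \<in> \<real>"
      show "z \<in> \<real>"
      proof (rule ccontr)
        assume "z \<notin> \<real>"
        then have "Im z \<noteq> 0" using complex_is_Real_iff by blast
        then have "e \<le> \<bar>Im z\<bar>" using e(3) z by blast
        moreover have "\<bar>Im (w z - z)\<bar> \<le> norm (w z - z)" by (rule abs_Im_le_cmod)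
        moreover have "Im (w z) = 0" using wr complex_is_Real_iff by blast
        ultimately show False using w[OF z] by simp
      qed
    qed
    have RS: "{z. poly ?P z = 0 \<and> z \<in> \<real>} = w ` {z. poly (cpoly Q) z = 0 \<and> z \<in> \<real>}"
    proof
      show "{z. poly ?P z = 0 \<and> z \<in> \<real>} \<subseteq> w ` {z. poly (cpoly Q) z = 0 \<and> z \<in> \<real>}"
      proof
        fix x assume x: "x \<in> {z. poly ?P z = 0 \<and> z \<in> \<real>}"
        then have "x \<in> ?S" by simp
        then obtain z where z: "z \<in> ?R" "x = w z" using Seq by blast
        then show "x \<in> w ` {z. poly (cpoly Q) z = 0 \<and> z \<in> \<real>}" using realw[OF z(1)] x by auto
      qed
      show "w ` {z. poly (cpoly Q) z = 0 \<and> z \<in> \<real>} \<subseteq> {z. poly ?P z = 0 \<and> z \<in> \<real>}"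
        using w realw by auto
    qed
    have c2: "card {z. poly ?P z = 0 \<and> z \<in> \<real>} = card {z. poly (cpoly Q) z = 0 \<and> z \<in> \<real>}"
      unfolding RS by (rule card_image) (rule inj_on_subset[OF inj], auto)
    have c3: "(\<forall>z. poly (cpoly Q) z = 0 \<longrightarrow> z \<in> \<real>) \<longrightarrow> (\<forall>z. poly ?P z = 0 \<longrightarrow> z \<in> \<real>)"
    proof (intro impI allI)
      fix x assume A: "\<forall>z. poly (cpoly Q) z = 0 \<longrightarrow> z \<in> \<real>" and x: "poly ?P x = 0"
      then have "x \<in> ?S" by simp
      then obtain z where z: "z \<in> ?R" "x = w z" using Seq by blast
      then show "x \<in> \<real>" using realw[OF z(1)] A by auto
    qed
    show ?case using Fn0 degFn c2 c3 Seq card_image[OF inj] cardQ by simp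
  qed
qed

definition hc :: "real \<Rightarrow> nat \<Rightarrow> nat \<Rightarrow> real" where
  "hc \<kappa> d k = (if k \<le> d \<and> even (d - k)
     then \<kappa> ^ ((d - k) div 2) * fact d / (fact k * fact ((d - k) div 2)) else 0)"

definition Hq :: "real \<Rightarrow> nat \<Rightarrow> real poly" where
  "Hq \<kappa> d = (\<Sum>k\<le>d. monom (hc \<kappa> d k) k)"

lemma coeff_Hq: "coeff (Hq \<kappa> d) k = hc \<kappa> d k"
  unfolding Hq_def by (auto simp: coeff_sum hc_def)

lemma ar0: fixes p F S x :: real assumes "S \<noteq> 0" "x \<noteq> 0"
  shows "(- p) * (2 * x * F) / (1 * (x * S)) = 0 - 2 * 1 * (p * F / (1 * S))"
  using assms by (simp add: field_simps)
lemma ar1: fixes p F K R k :: real assumes "K \<noteq> 0" "R \<noteq> 0" "k \<noteq> 0"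
  shows "p * (k * F) / ((k * K) * R) = p * F / (K * R) - 2 * (k + 1) * 0"
  using assms by (simp add: field_simps)
lemma ar2: fixes p F K S k x :: real assumes "K \<noteq> 0" "S \<noteq> 0" "k \<noteq> 0" "x \<noteq> 0" "k + 1 \<noteq> 0"
  shows "(- p) * ((k + 2 * x) * F) / ((k * K) * (x * S)) = (- p) * F / (K * (x * S)) - 2 * (k + 1) * (p * F / (((k+1) * (k * K)) * S))"
proof -
  have e: "2 * (k + 1) * (p * F / (((k+1) * (k * K)) * S)) = 2 * (p * F / ((k * K) * S))"
    using assms by (simp add: divide_simps)
  show ?thesis unfolding e using assms by (simp add: field_simps)
qed
lemma hc_rec:
  "hc (-1) (Suc d) k = (if k = 0 then 0 else hc (-1) d (k - 1)) - 2 * real (Suc k) * hc (-1) d (Suc k)"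
proof (cases "k \<le> Suc d \<and> even (Suc d - k)")
  case False
  then show ?thesis
  proof (cases "k \<le> Suc d")
    case True
    with False have "odd (Suc d - k)" by simp
    then show ?thesis using True
      by (cases k) (auto simp: hc_def)
  next
    case False
    then show ?thesis by (auto simp: hc_def)
  qed
next
  case True
  then obtain r where r: "Suc d = k + 2 * r" by (metis add_diff_inverse_nat evenE not_less)
  have L: "hc (-1) (Suc d) k = (-1) ^ r * fact (Suc d) / (fact k * fact r)"
    using r by (simp add: hc_def)
  define F :: real where "F = fact d"
  have F0: "F \<noteq> 0" unfolding F_def by simp
  have fd: "fact (Suc d) = real (Suc d) * F" unfolding F_def by simp
  show ?thesis
  proof (cases k)
    case 0
    then have r1: "r \<ge> 1" using r by simp
    then obtain s where s: "r = Suc s" by (cases r) auto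
    have d: "d = 1 + 2 * s" using r s 0 by simp
    define S :: real where "S = fact s"
    define x :: real where "x = real (Suc s)"
    define p :: real where "p = (-1) ^ s"
    have B: "hc (-1) d (Suc k) = p * F / (1 * S)"
      using d 0 by (simp add: hc_def F_def S_def p_def)
    have L': "hc (-1) (Suc d) k = (- p) * (2 * x * F) / (1 * (x * S))"
      unfolding L fd using r s 0 by (simp add: S_def x_def p_def)
    show ?thesis unfolding L' B using ar0[of S x p F] 0 by (simp add: S_def x_def)
  next
    case (Suc k')
    define K :: real where "K = fact k'"
    define kk :: real where "kk = real k"
    have A: "hc (-1) d (k - 1) = (-1) ^ r * F / (K * fact r)"
      using r Suc by (simp add: hc_def F_def K_def)
    have fk: "fact k = kk * K" using Suc by (simp add: K_def kk_def)
    show ?thesis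
    proof (cases r)
      case 0
      then have B: "hc (-1) d (Suc k) = 0" using r Suc by (simp add: hc_def)
      have L': "hc (-1) (Suc d) k = (-1) ^ r * (kk * F) / ((kk * K) * fact r)"
        unfolding L fd fk using r 0 by (simp add: kk_def)
      show ?thesis unfolding L' A B using ar1[of K "fact r" kk "(-1)^r" F] Suc
        by (simp add: K_def kk_def)
    next
      case (Suc s)
      define S :: real where "S = fact s"
      define x :: real where "x = real (Suc s)"
      define p :: real where "p = (-1) ^ s"
      have d: "d = k + 1 + 2 * s" using r Suc by simp
      have B: "hc (-1) d (Suc k) = p * F / (((kk + 1) * (kk * K)) * S)"
        using d fk by (simp add: hc_def F_def S_def p_def kk_def)
      have A': "hc (-1) d (k - 1) = (- p) * F / (K * (x * S))"
        unfolding A using Suc by (simp add: p_def x_def S_def)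
      have L': "hc (-1) (Suc d) k = (- p) * ((kk + 2 * x) * F) / ((kk * K) * (x * S))"
        unfolding L fd fk using r Suc by (simp add: S_def x_def p_def kk_def)
      show ?thesis unfolding L' A' B using ar2[of K S kk x p F] \<open>k = Suc k'\<close>
        by (simp add: K_def S_def kk_def x_def)
    qed
  qed
qed

lemma Hq_rec: "Hq (-1) (Suc d) = pCons 0 (Hq (-1) d) - smult 2 (pderiv (Hq (-1) d))"
proof (rule poly_eqI)
  fix k
  show "coeff (Hq (-1) (Suc d)) k = coeff (pCons 0 (Hq (-1) d) - smult 2 (pderiv (Hq (-1) d))) k"
    unfolding coeff_Hq coeff_diff coeff_smult coeff_pderiv hc_rec
    by (cases k) (simp_all add: coeff_Hq)
qed

lemma hc_zero: "k > d \<Longrightarrow> hc \<kappa> d k = 0"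
  by (simp add: hc_def)

lemma hc_top [simp]: "hc \<kappa> d d = 1"
  by (simp add: hc_def)

lemma degree_Hq [simp]: "degree (Hq \<kappa> d) = d"
proof (rule antisym)
  show "degree (Hq \<kappa> d) \<le> d"
    by (rule degree_le) (simp add: coeff_Hq hc_zero)
  show "d \<le> degree (Hq \<kappa> d)"
    by (rule le_degree) (simp add: coeff_Hq)
qed

lemma lead_Hq [simp]: "lead_coeff (Hq \<kappa> d) = 1"
  by (simp add: coeff_Hq)

lemma Hq_parity: "poly (Hq \<kappa> d) (- x) = (-1) ^ d * poly (Hq \<kappa> d) x"
proof -
  have "poly (Hq \<kappa> d) (- x) = (\<Sum>k\<le>d. hc \<kappa> d k * (- x) ^ k)"
    by (subst poly_sumN[of _ d]) (auto simp: coeff_Hq)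
  also have "\<dots> = (\<Sum>k\<le>d. (-1) ^ d * (hc \<kappa> d k * x ^ k))"
  proof (rule sum.cong[OF refl])
    fix k assume k: "k \<in> {..d}"
    show "hc \<kappa> d k * (- x) ^ k = (-1) ^ d * (hc \<kappa> d k * x ^ k)"
    proof (cases "even (d - k)")
      case True
      then have "even d = even k" using k by auto
      then have "(-1::real) ^ k = (-1) ^ d" by (metis neg_one_even_power neg_one_odd_power)
      then show ?thesis by (simp add: power_minus[of x])
    next
      case False
      then show ?thesis by (simp add: hc_def)
    qed
  qed
  also have "\<dots> = (-1) ^ d * poly (Hq \<kappa> d) x"
    by (subst poly_sumN[of _ d]) (auto simp: coeff_Hq sum_distrib_left)
  finally show ?thesis .
qed

lemma monic_prod_eq:
  fixes p :: "real poly"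
  assumes "degree p = d" "lead_coeff p = 1" "finite S" "card S = d" "\<forall>x\<in>S. poly p x = 0"
  shows "p = (\<Prod>x\<in>S. [:-x,1:])"
proof -
  let ?q = "(\<Prod>x\<in>S. [:-x,1:]) :: real poly"
  have dq: "degree ?q = d" using assms(3,4) by (subst degree_prod_sum_eq) auto
  have lq: "lead_coeff ?q = 1" by (simp add: lead_coeff_prod)
  show ?thesis
  proof (rule poly_eqI_degree_lead_coeff[of p d ?q S])
    show "coeff p d = coeff ?q d" using assms(1,2) dq lq by simp
    show "d \<le> card S" using assms by simp
    show "degree p \<le> d" "degree ?q \<le> d" using assms(1) dq by auto
    show "poly p z = poly ?q z" if "z \<in> S" for z
      using assms(3,5) that by (auto simp: poly_prod intro!: prod_zero[symmetric])
  qed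
qed

lemma prod_deriv_at:
  fixes S :: "real set"
  assumes "finite S" "s \<in> S"
  shows "poly (pderiv (\<Prod>x\<in>S. [:-x,1:])) s = (\<Prod>x\<in>S-{s}. s - x)"
proof -
  have "poly (pderiv (\<Prod>x\<in>S. [:-x,1:])) s = (\<Sum>a\<in>S. (\<Prod>x\<in>S-{a}. s - x))"
    by (simp add: pderiv_prod poly_sum poly_prod pderiv_pCons)
  also have "\<dots> = (\<Prod>x\<in>S-{s}. s - x)"
  proof (subst sum.remove[OF assms])
    have "(\<Sum>a\<in>S-{s}. (\<Prod>x\<in>S-{a}. s - x)) = 0"
      using assms by (intro sum.neutral ballI prod_zero) auto
    then show "(\<Prod>x\<in>S-{s}. s - x) + (\<Sum>a\<in>S-{s}. (\<Prod>x\<in>S-{a}. s - x)) = (\<Prod>x\<in>S-{s}. s - x)" by simp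
  qed
  finally show ?thesis .
qed

lemma sign_prod:
  fixes S :: "real set"
  assumes "finite S" "s \<in> S"
  shows "(-1) ^ card {x\<in>S. s < x} * (\<Prod>x\<in>S-{s}. s - x) > 0"
proof -
  define U where "U = {x\<in>S. s < x}"
  define L where "L = {x\<in>S. x < s}"
  have split: "S - {s} = L \<union> U" unfolding U_def L_def by auto
  have fU: "finite U" and fL: "finite L" using assms unfolding U_def L_def by auto
  have disj: "L \<inter> U = {}" unfolding U_def L_def by auto
  have P1: "(\<Prod>x\<in>S-{s}. s - x) = (\<Prod>x\<in>L. s - x) * (\<Prod>x\<in>U. s - x)"
    unfolding split by (rule prod.union_disjoint[OF fL fU disj])
  have P2: "(\<Prod>x\<in>U. s - x) = (-1) ^ card U * (\<Prod>x\<in>U. (x - s))"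
  proof -
    have "(\<Prod>x\<in>U. s - x) = (\<Prod>x\<in>U. (-1) * (x - s))" by (intro prod.cong) auto
    also have "\<dots> = (-1) ^ card U * (\<Prod>x\<in>U. (x - s))" by (simp only: prod.distrib prod_constant)
    finally show ?thesis .
  qed
  have A: "(\<Prod>x\<in>L. s - x) > 0" by (rule prod_pos) (auto simp: L_def)
  have B: "(\<Prod>x\<in>U. x - s) > 0" by (rule prod_pos) (auto simp: U_def)
  have sq: "(-1::real) ^ card U * (-1) ^ card U = 1"
    by (simp add: power_add[symmetric])
  have "(-1) ^ card U * (\<Prod>x\<in>S-{s}. s - x) = ((-1) ^ card U * (-1) ^ card U) * ((\<Prod>x\<in>L. s - x) * (\<Prod>x\<in>U. (x - s)))"
    unfolding P1 P2 by (simp only: ac_simps)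
  also have "\<dots> = (\<Prod>x\<in>L. s - x) * (\<Prod>x\<in>U. (x - s))" unfolding sq by simp
  also have "\<dots> > 0" using A B by simp
  finally show ?thesis unfolding U_def .
qed

lemma sgn_mult_lemma:
  fixes a b :: real
  assumes "(-1) ^ n * a < 0" "(-1) ^ n * b > 0"
  shows "a * b < 0"
proof -
  have "((-1) ^ n * a) * ((-1) ^ n * b) < 0" using assms by (simp add: mult_neg_pos)
  moreover have "((-1) ^ n * a) * ((-1) ^ n * b) = ((-1::real) ^ n * (-1) ^ n) * (a * b)" by (simp only: ac_simps)
  moreover have "(-1::real) ^ n * (-1) ^ n = 1" by (simp add: power_add[symmetric])
  ultimately show ?thesis by simp
qed

lemma Hq_root_value:
  assumes "finite S" "s \<in> S" "Hq (-1) d = (\<Prod>x\<in>S. [:-x,1:])"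
  shows "poly (Hq (-1) (Suc d)) s = -2 * (\<Prod>x\<in>S-{s}. s - x)"
proof -
  have z: "poly (Hq (-1) d) s = 0" using assms by (auto simp: poly_prod intro!: prod_zero)
  have "poly (Hq (-1) (Suc d)) s = s * poly (Hq (-1) d) s - 2 * poly (pderiv (Hq (-1) d)) s"
    by (simp add: Hq_rec)
  also have "\<dots> = -2 * (\<Prod>x\<in>S-{s}. s - x)"
    using z prod_deriv_at[OF assms(1,2)] assms(3) by simp
  finally show ?thesis .
qed

lemma Hq_real_roots: "card {x::real. poly (Hq (-1) d) x = 0} = d"
proof (induction d)
  case 0
  have "poly (Hq (-1) 0) x = 1" for x :: real
    by (subst poly_sumN[of _ 0]) (auto simp: coeff_Hq)
  then show ?case by simp
next
  case (Suc d)
  define S where "S = {x::real. poly (Hq (-1) d) x = 0}"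
  define H where "H = Hq (-1) (Suc d)"
  have finS: "finite S" unfolding S_def
    by (rule poly_roots_finite) (metis degree_Hq lead_Hq one_neq_zero leading_coeff_0_iff)
  have cS: "card S = d" using Suc.IH unfolding S_def .
  have Hd: "Hq (-1) d = (\<Prod>x\<in>S. [:-x,1:])"
    by (rule monic_prod_eq[OF _ _ finS cS]) (auto simp: S_def coeff_Hq)
  define N where "N s = card {x\<in>S. s < x}" for s
  have sgn: "(-1) ^ N s * poly H s < 0" if "s \<in> S" for s
  proof -
    have "poly H s = -2 * (\<Prod>x\<in>S-{s}. s - x)"
      unfolding H_def by (rule Hq_root_value[OF finS that Hd])
    then have "(-1) ^ N s * poly H s = -2 * ((-1) ^ N s * (\<Prod>x\<in>S-{s}. s - x))" by simp
    also have "\<dots> < 0" using sign_prod[OF finS that] unfolding N_def by simp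
    finally show ?thesis .
  qed
  have H0: "H \<noteq> 0" unfolding H_def by (metis degree_Hq lead_Hq one_neq_zero leading_coeff_0_iff)
  have "\<exists>n. \<forall>x\<ge>n. 1 \<le> poly H x"
    using poly_pinfty_gt_lc[of H] by (simp add: H_def coeff_Hq)
  then obtain M where M: "\<And>x. x \<ge> M \<Longrightarrow> poly H x \<ge> 1" by blast
  define P where "P x = (poly H x = 0)" for x
  have claim1: "\<exists>x. P x \<and> s < x \<and> (\<forall>y\<in>S. s < y \<longrightarrow> x < y)" if s: "s \<in> S" for s
  proof (cases "{x\<in>S. s < x} = {}")
    case True
    then have "N s = 0" unfolding N_def by (simp only: card.empty)
    then have "poly H s < 0" using sgn[OF s] by simp
    moreover have "poly H (max M (s+1)) > 0" using M[of "max M (s+1)"] by simp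
    ultimately have "\<exists>x. s < x \<and> x < max M (s+1) \<and> poly H x = 0"
      by (intro poly_IVT_pos) auto
    then obtain x where "s < x" "poly H x = 0" by blast
    then show ?thesis using True unfolding P_def by auto
  next
    case False
    define t where "t = Min {x\<in>S. s < x}"
    have fU: "finite {x\<in>S. s < x}" using finS by simp
    have t: "t \<in> S" "s < t" using Min_in[OF fU False] unfolding t_def by auto
    have tmin: "\<And>y. y \<in> S \<Longrightarrow> s < y \<Longrightarrow> t \<le> y" unfolding t_def using fU by auto
    have Ueq: "{x\<in>S. s < x} = insert t {x\<in>S. t < x}"
      using t tmin by force
    have "N s = Suc (N t)" unfolding N_def
      by (subst Ueq, subst card_insert_disjoint) (use finS in auto)
    then have "(-1) ^ N t * poly H s > 0" using sgn[OF s] by simp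
    then have "poly H t * poly H s < 0" using sgn[OF t(1)] by (rule sgn_mult_lemma[rotated])
    then obtain x where "s < x" "x < t" "poly H x = 0"
      using poly_IVT[of s t H] t(2) by (auto simp: mult.commute)
    then show ?thesis using tmin unfolding P_def by force
  qed
  have claim2: "\<exists>r. P r \<and> (\<forall>y\<in>S. r < y)"
  proof (cases "S = {}")
    case True
    then have "d = 0" using cS by simp
    then have "poly H 0 = 0" unfolding H_def by (simp add: poly_0_coeff_0 coeff_Hq hc_def)
    then show ?thesis using True unfolding P_def by auto
  next
    case False
    define m where "m = Min S"
    have m: "m \<in> S" using Min_in[OF finS False] unfolding m_def .
    have mmin: "\<And>y. y \<in> S \<Longrightarrow> m \<le> y" unfolding m_def using finS by auto
    have "{x\<in>S. m < x} = S - {m}" using mmin m by force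
    then have Nm: "N m = d - 1" unfolding N_def using cS finS m by simp
    have "card S > 0" using False finS by (simp add: card_gt_0_iff)
    then have d1: "d \<ge> 1" using cS by simp
    define a where "a = - max M (\<bar>m\<bar> + 1)"
    have am: "a < m" unfolding a_def by auto
    have Ha: "poly H a = (-1) ^ Suc d * poly H (- a)"
      unfolding H_def using Hq_parity[of "-1" "Suc d" "-a"] by simp
    have Hma: "poly H (- a) \<ge> 1" using M[of "-a"] unfolding a_def by simp
    have "(-1) ^ (d - 1) * poly H a = ((-1) ^ (d - 1) * (-1) ^ Suc d) * poly H (- a)"
      unfolding Ha by simp
    also have "(-1::real) ^ (d - 1) * (-1) ^ Suc d = 1"
    proof -
      have "(d - 1) + Suc d = 2 * d" using d1 by simp
      then show ?thesis by (simp add: power_add[symmetric])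
    qed
    finally have pa: "(-1) ^ (d - 1) * poly H a > 0" using Hma by simp
    have "poly H m * poly H a < 0"
      using sgn[OF m] pa unfolding Nm by (rule sgn_mult_lemma)
    then obtain x where "a < x" "x < m" "poly H x = 0"
      using poly_IVT[of a m H] am by (auto simp: mult.commute)
    then show ?thesis using mmin unfolding P_def by force
  qed
  define rho where "rho s = (SOME x. P x \<and> s < x \<and> (\<forall>y\<in>S. s < y \<longrightarrow> x < y))" for s
  have rho: "P (rho s) \<and> s < rho s \<and> (\<forall>y\<in>S. s < y \<longrightarrow> rho s < y)" if "s \<in> S" for s
    unfolding rho_def using someI_ex[OF claim1[OF that]] .
  obtain r0 where r0: "P r0" "\<forall>y\<in>S. r0 < y" using claim2 by blast
  have inj: "inj_on rho S"
  proof (rule inj_onI)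
    fix s s' assume ss: "s \<in> S" "s' \<in> S" "rho s = rho s'"
    show "s = s'"
    proof (rule ccontr)
      assume "s \<noteq> s'"
      then consider "s < s'" | "s' < s" by linarith
      then show False
      proof cases
        case 1
        then have "rho s < s'" using rho[OF ss(1)] ss(2) by blast
        then show False using rho[OF ss(2)] ss(3) by simp
      next
        case 2
        then have "rho s' < s" using rho[OF ss(2)] ss(1) by blast
        then show False using rho[OF ss(1)] ss(3) by simp
      qed
    qed
  qed
  have r0n: "r0 \<notin> rho ` S"
  proof
    assume "r0 \<in> rho ` S"
    then obtain s where "s \<in> S" "r0 = rho s" by blast
    then show False using rho[of s] r0(2) by force
  qed
  have sub: "insert r0 (rho ` S) \<subseteq> {x. poly H x = 0}"
    using rho r0 unfolding P_def by auto
  have "card (insert r0 (rho ` S)) = Suc d"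
    using r0n card_image[OF inj] cS finS by simp
  moreover have "card (insert r0 (rho ` S)) \<le> card {x. poly H x = 0}"
    by (rule card_mono[OF poly_roots_finite[OF H0] sub])
  moreover have "card {x. poly H x = 0} \<le> Suc d"
    using card_poly_roots_bound[OF H0] unfolding H_def by simp
  ultimately show ?case unfolding H_def by simp
qed

lemma cpoly_of_real: "poly (cpoly p) (complex_of_real x) = complex_of_real (poly p x)"
proof -
  have "poly (cpoly p) (complex_of_real x) = (\<Sum>i\<le>degree p. complex_of_real (coeff p i) * complex_of_real x ^ i)"
    by (subst poly_altdef) simp
  also have "\<dots> = complex_of_real (\<Sum>i\<le>degree p. coeff p i * x ^ i)" by simp
  also have "\<dots> = complex_of_real (poly p x)" by (simp add: poly_altdef)
  finally show ?thesis .
qed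

lemma real_roots_complex:
  fixes p :: "real poly"
  assumes "p \<noteq> 0" "card {x::real. poly p x = 0} = degree p"
  shows "{z. poly (cpoly p) z = 0} = complex_of_real ` {x. poly p x = 0}"
proof -
  let ?R = "{x::real. poly p x = 0}" and ?C = "{z. poly (cpoly p) z = 0}"
  have sub: "complex_of_real ` ?R \<subseteq> ?C" by (auto simp: cpoly_of_real)
  have finC: "finite ?C" by (rule poly_roots_finite) (use assms(1) in simp)
  have "card (complex_of_real ` ?R) = degree p"
    using assms(2) by (subst card_image) (auto intro: inj_onI)
  moreover have "card ?C \<le> degree p" using card_poly_roots_bound[of "cpoly p"] assms(1) by simp
  ultimately show ?thesis using card_subset_eq[OF finC sub] card_mono[OF finC sub] by simp
qed

lemma Hm_props:
  "card {z. poly (cpoly (Hq (-1) d)) z = 0} = d \<and> (\<forall>z. poly (cpoly (Hq (-1) d)) z = 0 \<longrightarrow> z \<in> \<real>)"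
proof -
  have H0: "Hq (-1) d \<noteq> 0" by (metis degree_Hq lead_Hq one_neq_zero leading_coeff_0_iff)
  have eq: "{z. poly (cpoly (Hq (-1) d)) z = 0} = complex_of_real ` {x. poly (Hq (-1) d) x = 0}"
    by (rule real_roots_complex[OF H0]) (simp add: Hq_real_roots)
  have "card {z. poly (cpoly (Hq (-1) d)) z = 0} = d"
    unfolding eq using Hq_real_roots[of d] by (subst card_image) (auto intro: inj_onI)
  moreover have "\<forall>z. poly (cpoly (Hq (-1) d)) z = 0 \<longrightarrow> z \<in> \<real>"
    using eq by (auto simp: Reals_def)
  ultimately show ?thesis by blast
qed

lemma Hq_rot: "poly (cpoly (Hq (-1) d)) (\<i> * u) = \<i> ^ d * poly (cpoly (Hq 1 d)) u"
proof -
  have "poly (cpoly (Hq (-1) d)) (\<i> * u) = (\<Sum>k\<le>d. complex_of_real (hc (-1) d k) * (\<i> * u) ^ k)"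
    by (subst poly_sumN[of _ d]) (auto simp: coeff_Hq)
  also have "\<dots> = (\<Sum>k\<le>d. \<i> ^ d * (complex_of_real (hc 1 d k) * u ^ k))"
  proof (rule sum.cong[OF refl])
    fix k assume k: "k \<in> {..d}"
    show "complex_of_real (hc (-1) d k) * (\<i> * u) ^ k = \<i> ^ d * (complex_of_real (hc 1 d k) * u ^ k)"
    proof (cases "even (d - k)")
      case True
      then obtain r where r: "d - k = 2 * r" by blast
      have dk: "d = k + 2 * r" using r k by simp
      have i: "\<i> ^ d = \<i> ^ k * (-1) ^ r"
        unfolding dk by (simp add: power_add power_mult)
      have "hc (-1) d k = (-1) ^ r * hc 1 d k" using r k by (simp add: hc_def)
      then show ?thesis unfolding i by (simp add: power_mult_distrib)
    next
      case False
      then show ?thesis by (simp add: hc_def)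
    qed
  qed
  also have "\<dots> = \<i> ^ d * poly (cpoly (Hq 1 d)) u"
    by (subst poly_sumN[of _ d]) (auto simp: coeff_Hq sum_distrib_left)
  finally show ?thesis .
qed

lemma Hp_props:
  "card {z. poly (cpoly (Hq 1 d)) z = 0} = d \<and>
   card {z. poly (cpoly (Hq 1 d)) z = 0 \<and> z \<in> \<real>} = (if odd d then 1 else 0)"
proof -
  have iff: "poly (cpoly (Hq 1 d)) u = 0 \<longleftrightarrow> poly (cpoly (Hq (-1) d)) (\<i> * u) = 0" for u
    unfolding Hq_rot by simp
  have eq: "{z. poly (cpoly (Hq 1 d)) z = 0} = (\<lambda>z. - \<i> * z) ` {z. poly (cpoly (Hq (-1) d)) z = 0}"
  proof (intro set_eqI iffI)
    fix u assume "u \<in> {z. poly (cpoly (Hq 1 d)) z = 0}"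
    then have "\<i> * u \<in> {z. poly (cpoly (Hq (-1) d)) z = 0}" using iff by simp
    moreover have "u = - \<i> * (\<i> * u)" by simp
    ultimately show "u \<in> (\<lambda>z. - \<i> * z) ` {z. poly (cpoly (Hq (-1) d)) z = 0}" by blast
  next
    fix u assume "u \<in> (\<lambda>z. - \<i> * z) ` {z. poly (cpoly (Hq (-1) d)) z = 0}"
    then obtain z where "poly (cpoly (Hq (-1) d)) z = 0" "u = - \<i> * z" by blast
    then show "u \<in> {z. poly (cpoly (Hq 1 d)) z = 0}" using iff by simp
  qed
  have c1: "card {z. poly (cpoly (Hq 1 d)) z = 0} = d"
    unfolding eq using Hm_props[of d] by (subst card_image) (auto intro: inj_onI)
  have realsub: "{z. poly (cpoly (Hq 1 d)) z = 0 \<and> z \<in> \<real>} \<subseteq> {0}"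
  proof
    fix u assume u: "u \<in> {z. poly (cpoly (Hq 1 d)) z = 0 \<and> z \<in> \<real>}"
    then have "\<i> * u \<in> \<real>" using iff Hm_props[of d] by auto
    moreover have "u \<in> \<real>" using u by simp
    ultimately have "Re u = 0" "Im u = 0"
      by (auto simp: complex_is_Real_iff)
    then show "u \<in> {0}" by (simp add: complex_eq_iff)
  qed
  have p0: "poly (cpoly (Hq 1 d)) 0 = complex_of_real (hc 1 d 0)"
    by (simp add: poly_0_coeff_0 coeff_Hq)
  have "hc 1 d 0 = 0 \<longleftrightarrow> odd d" by (simp add: hc_def)
  then have c2: "card {z. poly (cpoly (Hq 1 d)) z = 0 \<and> z \<in> \<real>} = (if odd d then 1 else 0)"
  proof (cases "odd d")
    case True
    then have "{z. poly (cpoly (Hq 1 d)) z = 0 \<and> z \<in> \<real>} = {0}"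
      using realsub p0 \<open>hc 1 d 0 = 0 \<longleftrightarrow> odd d\<close> by auto
    then show ?thesis using True by simp
  next
    case False
    have E: "{z. poly (cpoly (Hq 1 d)) z = 0 \<and> z \<in> \<real>} = {}"
      using realsub p0 \<open>hc 1 d 0 = 0 \<longleftrightarrow> odd d\<close> False by auto
    show ?thesis unfolding E using False by simp
  qed
  show ?thesis using c1 c2 by blast
qed

lemma binom_shift_identity:
  fixes a :: "nat \<Rightarrow> 'a::comm_ring_1" and w :: 'a
  shows "(\<Sum>j\<le>d. of_nat (d choose j) * a j * (w - 1) ^ j) =
         (\<Sum>k\<le>d. of_nat (d choose k) * (\<Sum>i\<le>d-k. (-1) ^ i * of_nat ((d-k) choose i) * a (k+i)) * w ^ k)"
proof -
  define g where "g k i = of_nat (d choose k) * of_nat ((d-k) choose i) * (-1) ^ i * a (k+i) * w ^ k" for k i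
  have "(\<Sum>j\<le>d. of_nat (d choose j) * a j * (w - 1) ^ j) =
        (\<Sum>j\<le>d. \<Sum>k\<le>j. g k (j - k))"
  proof (rule sum.cong[OF refl])
    fix j assume j: "j \<in> {..d}"
    have "(w - 1) ^ j = (\<Sum>k\<le>j. of_nat (j choose k) * w ^ k * (-1) ^ (j - k))"
      using binomial_ring[of w "-1" j] by simp
    then have "of_nat (d choose j) * a j * (w - 1) ^ j =
               (\<Sum>k\<le>j. of_nat (d choose j) * of_nat (j choose k) * (-1) ^ (j - k) * a j * w ^ k)"
      by (simp add: sum_distrib_left ac_simps)
    also have "\<dots> = (\<Sum>k\<le>j. g k (j - k))"
    proof (rule sum.cong[OF refl])
      fix k assume k: "k \<in> {..j}"
      have "(d choose j) * (j choose k) = (d choose k) * ((d - k) choose (j - k))"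
        using choose_mult[of k j d] j k by simp
      then have "of_nat (d choose j) * of_nat (j choose k) = (of_nat (d choose k) * of_nat ((d - k) choose (j - k)) :: 'a)"
        by (metis of_nat_mult)
      moreover have "k + (j - k) = j" using k by simp
      ultimately show "of_nat (d choose j) * of_nat (j choose k) * (-1) ^ (j - k) * a j * w ^ k = g k (j - k)"
        unfolding g_def by simp
    qed
    finally show "of_nat (d choose j) * a j * (w - 1) ^ j = (\<Sum>k\<le>j. g k (j - k))" .
  qed
  also have "\<dots> = (\<Sum>(k,i)\<in>{(k,i). k + i \<le> d}. g k i)"
    by (rule sum.triangle_reindex_eq[symmetric])
  also have "{(k,i). k + i \<le> d} = Sigma {..d} (\<lambda>k. {..d-k})" by auto
  also have "(\<Sum>(k,i)\<in>Sigma {..d} (\<lambda>k. {..d-k}). g k i) = (\<Sum>k\<le>d. \<Sum>i\<le>d-k. g k i)"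
    by (rule sum.Sigma[symmetric]) auto
  also have "\<dots> = (\<Sum>k\<le>d. of_nat (d choose k) * (\<Sum>i\<le>d-k. (-1) ^ i * of_nat ((d-k) choose i) * a (k+i)) * w ^ k)"
    unfolding g_def by (simp add: sum_distrib_left sum_distrib_right ac_simps)
  finally show ?thesis .
qed

lemma affine_roots:
  fixes J F :: "real poly" and c \<delta> C :: real
  assumes c: "c \<noteq> 0" and dl: "\<delta> \<noteq> 0" and C: "C \<noteq> 0"
    and id: "\<And>u. poly (cpoly J) (complex_of_real c * (complex_of_real \<delta> * u - 1)) = complex_of_real C * poly (cpoly F) u"
  shows "card {z. poly (cpoly J) z = 0} = card {z. poly (cpoly F) z = 0}"
    "card {z. poly (cpoly J) z = 0 \<and> z \<in> \<real>} = card {z. poly (cpoly F) z = 0 \<and> z \<in> \<real>}"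
    "(\<forall>z. poly (cpoly F) z = 0 \<longrightarrow> z \<in> \<real>) \<Longrightarrow> (\<forall>z. poly (cpoly J) z = 0 \<longrightarrow> z \<in> \<real>)"
proof -
  define h where "h u = complex_of_real c * (complex_of_real \<delta> * u - 1)" for u
  define g where "g z = (z / complex_of_real c + 1) / complex_of_real \<delta>" for z
  have gh: "g (h u) = u" for u unfolding g_def h_def using c dl by (simp add: field_simps)
  have hg: "h (g z) = z" for z unfolding g_def h_def using c dl by (simp add: field_simps)
  have inj: "inj h" by (metis gh injI)
  have root: "poly (cpoly J) (h u) = 0 \<longleftrightarrow> poly (cpoly F) u = 0" for u
    unfolding h_def id using C by simp
  have hreal: "h u \<in> \<real> \<longleftrightarrow> u \<in> \<real>" for u
  proof
    assume "h u \<in> \<real>"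
    then have "g (h u) \<in> \<real>" unfolding g_def by (auto intro!: Reals_divide Reals_add)
    then show "u \<in> \<real>" by (simp add: gh)
  qed (auto simp: h_def)
  have e1: "{z. poly (cpoly J) z = 0} = h ` {z. poly (cpoly F) z = 0}"
  proof (intro set_eqI iffI)
    fix z assume "z \<in> {z. poly (cpoly J) z = 0}"
    then have "poly (cpoly F) (g z) = 0" using root[of "g z"] hg[of z] by simp
    then have "h (g z) \<in> h ` {z. poly (cpoly F) z = 0}" by blast
    then show "z \<in> h ` {z. poly (cpoly F) z = 0}" unfolding hg .
  next
    fix z assume "z \<in> h ` {z. poly (cpoly F) z = 0}"
    then obtain u where "z = h u" "poly (cpoly F) u = 0" by blast
    then show "z \<in> {z. poly (cpoly J) z = 0}" using root by simp
  qed
  have e2: "{z. poly (cpoly J) z = 0 \<and> z \<in> \<real>} = h ` {z. poly (cpoly F) z = 0 \<and> z \<in> \<real>}"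
  proof (intro set_eqI iffI)
    fix z assume z: "z \<in> {z. poly (cpoly J) z = 0 \<and> z \<in> \<real>}"
    then have "poly (cpoly F) (g z) = 0" using root[of "g z"] hg[of z] by simp
    moreover have "g z \<in> \<real>" using z hreal[of "g z"] hg[of z] by simp
    ultimately have "h (g z) \<in> h ` {z. poly (cpoly F) z = 0 \<and> z \<in> \<real>}" by blast
    then show "z \<in> h ` {z. poly (cpoly F) z = 0 \<and> z \<in> \<real>}" unfolding hg .
  next
    fix z assume "z \<in> h ` {z. poly (cpoly F) z = 0 \<and> z \<in> \<real>}"
    then obtain u where "z = h u" "poly (cpoly F) u = 0" "u \<in> \<real>" by blast
    then show "z \<in> {z. poly (cpoly J) z = 0 \<and> z \<in> \<real>}" using root hreal by simp
  qed
  show "card {z. poly (cpoly J) z = 0} = card {z. poly (cpoly F) z = 0}"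
    unfolding e1 by (rule card_image) (rule inj_on_subset[OF inj], simp)
  show "card {z. poly (cpoly J) z = 0 \<and> z \<in> \<real>} = card {z. poly (cpoly F) z = 0 \<and> z \<in> \<real>}"
    unfolding e2 by (rule card_image) (rule inj_on_subset[OF inj], simp)
  show "(\<forall>z. poly (cpoly F) z = 0 \<longrightarrow> z \<in> \<real>) \<Longrightarrow> (\<forall>z. poly (cpoly J) z = 0 \<longrightarrow> z \<in> \<real>)"
  proof (intro allI impI)
    fix z assume A: "\<forall>z. poly (cpoly F) z = 0 \<longrightarrow> z \<in> \<real>" and z: "poly (cpoly J) z = 0"
    then have "poly (cpoly F) (g z) = 0" using root[of "g z"] hg[of z] by simp
    then have "g z \<in> \<real>" using A by blast
    then show "z \<in> \<real>" using hreal[of "g z"] hg[of z] by simp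
  qed
qed

lemma cpoly_sum: "cpoly (sum f A) = (\<Sum>i\<in>A. cpoly (f i))"
  by (rule poly_eqI) (simp add: coeff_sum)

lemma poly_cJ: "poly (cpoly (jensen_J \<alpha> d n)) z = (\<Sum>j\<le>d. complex_of_real (real (d choose j) * \<alpha> (n + j)) * z ^ j)"
  unfolding jensen_J_def
  by (simp add: cpoly_sum poly_sum poly_monom map_poly_monom del: of_real_mult)

lemma poly_cK: "poly (cpoly (jensen_K \<alpha> d n)) z = (\<Sum>j\<le>d. complex_of_real (real (d choose j) * \<alpha> (n + j)) * z ^ (d - j))"
  unfolding jensen_K_def
  by (simp add: cpoly_sum poly_sum poly_monom map_poly_monom del: of_real_mult)

definition aa :: "(nat \<Rightarrow> real) \<Rightarrow> (nat \<Rightarrow> real) \<Rightarrow> nat \<Rightarrow> nat \<Rightarrow> real" where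
  "aa \<alpha> A n j = \<alpha> (n + j) / \<alpha> n * exp (- (A n * real j))"

definition Ecf :: "(nat \<Rightarrow> real) \<Rightarrow> (nat \<Rightarrow> real) \<Rightarrow> nat \<Rightarrow> nat \<Rightarrow> nat \<Rightarrow> real" where
  "Ecf \<alpha> A d n k = (\<Sum>i\<le>d-k. (-1) ^ i * real ((d-k) choose i) * aa \<alpha> A n (k+i))"

definition Fp :: "(nat \<Rightarrow> real) \<Rightarrow> (nat \<Rightarrow> real) \<Rightarrow> (nat \<Rightarrow> real) \<Rightarrow> nat \<Rightarrow> nat \<Rightarrow> real poly" where
  "Fp \<alpha> A \<delta> d n = (\<Sum>k\<le>d. monom (real (d choose k) * Ecf \<alpha> A d n k / \<delta> n ^ (d-k)) k)"

lemma coeff_Fp: "coeff (Fp \<alpha> A \<delta> d n) k = (if k \<le> d then real (d choose k) * Ecf \<alpha> A d n k / \<delta> n ^ (d-k) else 0)"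
  unfolding Fp_def by (auto simp: coeff_sum)

lemma degree_Fp: "degree (Fp \<alpha> A \<delta> d n) \<le> d"
  by (rule degree_le) (simp add: coeff_Fp)

lemma jensen_identity:
  assumes "\<alpha> n > 0" "\<delta> n > 0"
  shows "poly (cpoly (jensen_J \<alpha> d n)) (complex_of_real (exp (- A n)) * (complex_of_real (\<delta> n) * u - 1))
       = complex_of_real (\<alpha> n * \<delta> n ^ d) * poly (cpoly (Fp \<alpha> A \<delta> d n)) u"
proof -
  let ?c = "complex_of_real (exp (- A n))" and ?w = "complex_of_real (\<delta> n) * u"
  let ?a = "\<lambda>j. complex_of_real (aa \<alpha> A n j)"
  have t: "complex_of_real (real (d choose j) * \<alpha> (n + j)) * (?c * (?w - 1)) ^ j
        = complex_of_real (\<alpha> n) * (of_nat (d choose j) * ?a j * (?w - 1) ^ j)" for j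
  proof -
    have "exp (- A n) ^ j = exp (- (A n * real j))" by (simp add: exp_of_nat_mult[symmetric] mult.commute)
    then have "\<alpha> (n + j) * exp (- A n) ^ j = \<alpha> n * aa \<alpha> A n j"
      unfolding aa_def using assms(1) by simp
    then have "complex_of_real (\<alpha> (n + j)) * ?c ^ j = complex_of_real (\<alpha> n) * ?a j"
      by (metis of_real_mult of_real_power)
    moreover have "complex_of_real (real (d choose j) * \<alpha> (n + j)) * (?c * (?w - 1)) ^ j
        = of_nat (d choose j) * (complex_of_real (\<alpha> (n + j)) * ?c ^ j) * (?w - 1) ^ j"
      by (simp only: power_mult_distrib of_real_mult of_real_of_nat_eq ac_simps)
    ultimately show ?thesis by (simp only: ac_simps)
  qed
  have "poly (cpoly (jensen_J \<alpha> d n)) (?c * (?w - 1))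
      = complex_of_real (\<alpha> n) * (\<Sum>j\<le>d. of_nat (d choose j) * ?a j * (?w - 1) ^ j)"
    unfolding poly_cJ t by (simp add: sum_distrib_left)
  also have "\<dots> = complex_of_real (\<alpha> n) * (\<Sum>k\<le>d. of_nat (d choose k) * (\<Sum>i\<le>d-k. (-1) ^ i * of_nat ((d-k) choose i) * ?a (k+i)) * ?w ^ k)"
    by (subst binom_shift_identity) simp
  also have "\<dots> = complex_of_real (\<alpha> n * \<delta> n ^ d) * poly (cpoly (Fp \<alpha> A \<delta> d n)) u"
  proof -
    have "poly (cpoly (Fp \<alpha> A \<delta> d n)) u = (\<Sum>k\<le>d. complex_of_real (real (d choose k) * Ecf \<alpha> A d n k / \<delta> n ^ (d-k)) * u ^ k)"
      by (subst poly_sumN[of _ d]) (auto simp: coeff_Fp degree_Fp)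
    moreover have "complex_of_real (\<alpha> n) * (of_nat (d choose k) * (\<Sum>i\<le>d-k. (-1) ^ i * of_nat ((d-k) choose i) * ?a (k+i)) * ?w ^ k)
       = complex_of_real (\<alpha> n * \<delta> n ^ d) * (complex_of_real (real (d choose k) * Ecf \<alpha> A d n k / \<delta> n ^ (d-k)) * u ^ k)"
      if k: "k \<le> d" for k
    proof -
      have e: "(\<Sum>i\<le>d-k. (-1) ^ i * of_nat ((d-k) choose i) * ?a (k+i)) = complex_of_real (Ecf \<alpha> A d n k)"
        unfolding Ecf_def by simp
      have dd: "\<delta> n ^ d / \<delta> n ^ (d-k) = \<delta> n ^ k"
        using k assms(2) by (simp add: power_diff)
      have "complex_of_real (\<alpha> n * \<delta> n ^ d) * (complex_of_real (real (d choose k) * Ecf \<alpha> A d n k / \<delta> n ^ (d-k)) * u ^ k)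
          = complex_of_real (\<alpha> n * (real (d choose k) * Ecf \<alpha> A d n k) * (\<delta> n ^ d / \<delta> n ^ (d-k))) * u ^ k"
        by (simp add: field_simps)
      also have "\<dots> = complex_of_real (\<alpha> n) * (of_nat (d choose k) * complex_of_real (Ecf \<alpha> A d n k) * ?w ^ k)"
        unfolding dd by (simp add: power_mult_distrib)
      finally show ?thesis unfolding e by simp
    qed
    ultimately show ?thesis by (simp add: sum_distrib_left)
  qed
  finally show ?thesis .
qed

lemma coeff_J: "coeff (jensen_J \<alpha> d n) k = (if k \<le> d then real (d choose k) * \<alpha> (n + k) else 0)"
  unfolding jensen_J_def by (auto simp: coeff_sum)

lemma degree_J: assumes "\<alpha> (n + d) \<noteq> 0" shows "degree (jensen_J \<alpha> d n) = d"
proof (rule antisym)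
  show "degree (jensen_J \<alpha> d n) \<le> d" by (rule degree_le) (simp add: coeff_J)
  show "d \<le> degree (jensen_J \<alpha> d n)" by (rule le_degree) (use assms in \<open>simp add: coeff_J\<close>)
qed

lemma degree_K: assumes "\<alpha> n \<noteq> 0" shows "degree (jensen_K \<alpha> d n) = d"
proof (rule antisym)
  show "degree (jensen_K \<alpha> d n) \<le> d"
    unfolding jensen_K_def by (rule degree_sum_le) (auto intro: order_trans[OF degree_monom_le])
  have "coeff (jensen_K \<alpha> d n) d = (\<Sum>j\<le>d. if d - j = d then real (d choose j) * \<alpha> (n + j) else 0)"
    unfolding jensen_K_def by (simp add: coeff_sum coeff_monom)
  also have "\<dots> = (\<Sum>j\<in>{0}. real (d choose j) * \<alpha> (n + j))"
    by (rule sum.mono_neutral_cong_right) auto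
  finally have "coeff (jensen_K \<alpha> d n) d = \<alpha> n" by simp
  then show "d \<le> degree (jensen_K \<alpha> d n)" by (intro le_degree) (use assms in simp)
qed

lemma K_via_J:
  assumes "z \<noteq> 0"
  shows "poly (cpoly (jensen_K \<alpha> d n)) z = z ^ d * poly (cpoly (jensen_J \<alpha> d n)) (inverse z)"
proof -
  have "poly (cpoly (jensen_K \<alpha> d n)) z = (\<Sum>j\<le>d. complex_of_real (real (d choose j) * \<alpha> (n + j)) * z ^ (d - j))"
    by (rule poly_cK)
  also have "\<dots> = (\<Sum>j\<le>d. z ^ d * (complex_of_real (real (d choose j) * \<alpha> (n + j)) * inverse z ^ j))"
  proof (rule sum.cong[OF refl])
    fix j assume "j \<in> {..d}"
    then have "z ^ (d - j) = z ^ d * inverse z ^ j" using assms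
      by (simp add: power_diff power_inverse field_simps)
    then show "complex_of_real (real (d choose j) * \<alpha> (n + j)) * z ^ (d - j)
        = z ^ d * (complex_of_real (real (d choose j) * \<alpha> (n + j)) * inverse z ^ j)" by simp
  qed
  also have "\<dots> = z ^ d * poly (cpoly (jensen_J \<alpha> d n)) (inverse z)"
    by (simp add: poly_cJ sum_distrib_left)
  finally show ?thesis .
qed

lemma K_at0: "poly (cpoly (jensen_K \<alpha> d n)) 0 = complex_of_real (\<alpha> (n + d))"
proof -
  have "poly (cpoly (jensen_K \<alpha> d n)) 0 = (\<Sum>j\<le>d. complex_of_real (real (d choose j) * \<alpha> (n + j)) * 0 ^ (d - j))"
    by (rule poly_cK)
  also have "\<dots> = (\<Sum>j\<in>{d}. complex_of_real (real (d choose j) * \<alpha> (n + j)) * 0 ^ (d - j))"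
    by (rule sum.mono_neutral_cong_right) auto
  finally show ?thesis by simp
qed

lemma J_at0: "poly (cpoly (jensen_J \<alpha> d n)) 0 = complex_of_real (\<alpha> n)"
proof -
  have "poly (cpoly (jensen_J \<alpha> d n)) 0 = (\<Sum>j\<le>d. complex_of_real (real (d choose j) * \<alpha> (n + j)) * 0 ^ j)"
    by (rule poly_cJ)
  also have "\<dots> = (\<Sum>j\<in>{0}. complex_of_real (real (d choose j) * \<alpha> (n + j)) * 0 ^ j)"
    by (rule sum.mono_neutral_cong_right) auto
  finally show ?thesis by simp
qed

lemma K_roots:
  assumes "\<alpha> n \<noteq> 0" "\<alpha> (n + d) \<noteq> 0"
  shows "{z. poly (cpoly (jensen_K \<alpha> d n)) z = 0} = inverse ` {z. poly (cpoly (jensen_J \<alpha> d n)) z = 0}"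
proof (intro set_eqI iffI)
  fix z assume z: "z \<in> {z. poly (cpoly (jensen_K \<alpha> d n)) z = 0}"
  have z0: "z \<noteq> 0" using z K_at0[of \<alpha> d n] assms by auto
  then have "poly (cpoly (jensen_J \<alpha> d n)) (inverse z) = 0" using z K_via_J[OF z0] by simp
  then have "inverse (inverse z) \<in> inverse ` {z. poly (cpoly (jensen_J \<alpha> d n)) z = 0}" by blast
  then show "z \<in> inverse ` {z. poly (cpoly (jensen_J \<alpha> d n)) z = 0}" by simp
next
  fix z assume "z \<in> inverse ` {z. poly (cpoly (jensen_J \<alpha> d n)) z = 0}"
  then obtain y where y: "z = inverse y" "poly (cpoly (jensen_J \<alpha> d n)) y = 0" by blast
  have y0: "y \<noteq> 0" using y(2) J_at0[of \<alpha> d n] assms by auto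
  then have "z \<noteq> 0" using y(1) by simp
  then show "z \<in> {z. poly (cpoly (jensen_K \<alpha> d n)) z = 0}" using K_via_J y by simp
qed

lemma jensen_transfer:
  assumes apos: "\<And>j. \<alpha> j > 0" and dpos: "\<delta> n > 0"
    and cF: "card {z. poly (cpoly (Fp \<alpha> A \<delta> d n)) z = 0} = d"
    and rF: "card {z. poly (cpoly (Fp \<alpha> A \<delta> d n)) z = 0 \<and> z \<in> \<real>} = R"
    and aF: "allr \<longrightarrow> (\<forall>z. poly (cpoly (Fp \<alpha> A \<delta> d n)) z = 0 \<longrightarrow> z \<in> \<real>)"
  shows "\<forall>P \<in> {jensen_J \<alpha> d n, jensen_K \<alpha> d n}.
           rsquarefree (cpoly P) \<and> card {z. poly (cpoly P) z = 0 \<and> z \<in> \<real>} = R \<and>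
           (allr \<longrightarrow> (\<forall>z. poly (cpoly P) z = 0 \<longrightarrow> z \<in> \<real>))"
proof -
  let ?J = "jensen_J \<alpha> d n" and ?K = "jensen_K \<alpha> d n" and ?F = "Fp \<alpha> A \<delta> d n"
  have a1: "\<alpha> n \<noteq> 0" "\<alpha> (n + d) \<noteq> 0" using apos[of n] apos[of "n+d"] by auto
  have ex: "exp (- A n) \<noteq> 0" by simp
  have C: "\<alpha> n * \<delta> n ^ d \<noteq> 0" using a1 dpos by simp
  note aff = affine_roots[OF ex less_imp_neq[OF dpos, symmetric] C jensen_identity[where \<alpha>=\<alpha> and n=n and \<delta>=\<delta> and A=A and d=d, OF apos[of n] dpos]]
  have dJ: "degree ?J = d" using degree_J a1 by blast
  have dK: "degree ?K = d" using degree_K a1 by blast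
  have J0: "?J \<noteq> 0" "?K \<noteq> 0" using a1 coeff_J[of \<alpha> d n d] K_at0[of \<alpha> d n] by auto
  have cJ: "card {z. poly (cpoly ?J) z = 0} = d" using aff(1) cF by simp
  have rJ: "card {z. poly (cpoly ?J) z = 0 \<and> z \<in> \<real>} = R" using aff(2) rF by simp
  have arJ: "allr \<longrightarrow> (\<forall>z. poly (cpoly ?J) z = 0 \<longrightarrow> z \<in> \<real>)" using aff(3) aF by blast
  have KR: "{z. poly (cpoly ?K) z = 0} = inverse ` {z. poly (cpoly ?J) z = 0}"
    by (rule K_roots[OF a1])
  have KRr: "{z. poly (cpoly ?K) z = 0 \<and> z \<in> \<real>} = inverse ` {z. poly (cpoly ?J) z = 0 \<and> z \<in> \<real>}"
  proof (intro set_eqI iffI)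
    fix z assume z: "z \<in> {z. poly (cpoly ?K) z = 0 \<and> z \<in> \<real>}"
    then have "z \<in> inverse ` {z. poly (cpoly ?J) z = 0}" using KR by blast
    then obtain y where y: "poly (cpoly ?J) y = 0" "z = inverse y" by blast
    then have "y = inverse z" by simp
    then have "y \<in> \<real>" using z Reals_inverse by simp
    then show "z \<in> inverse ` {z. poly (cpoly ?J) z = 0 \<and> z \<in> \<real>}" using y by blast
  next
    fix z assume "z \<in> inverse ` {z. poly (cpoly ?J) z = 0 \<and> z \<in> \<real>}"
    then obtain y where y: "poly (cpoly ?J) y = 0" "y \<in> \<real>" "z = inverse y" by blast
    then have "z \<in> inverse ` {z. poly (cpoly ?J) z = 0}" by blast
    then have "poly (cpoly ?K) z = 0" using KR by blast
    moreover have "z \<in> \<real>" using y Reals_inverse by simp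
    ultimately show "z \<in> {z. poly (cpoly ?K) z = 0 \<and> z \<in> \<real>}" by simp
  qed
  have injI: "inj_on inverse (X :: complex set)" for X by (rule inj_onI) (metis inverse_inverse_eq)
  have cK: "card {z. poly (cpoly ?K) z = 0} = d" unfolding KR using cJ by (simp add: card_image[OF injI])
  have rK: "card {z. poly (cpoly ?K) z = 0 \<and> z \<in> \<real>} = R" unfolding KRr using rJ by (simp add: card_image[OF injI])
  have arK: "allr \<longrightarrow> (\<forall>z. poly (cpoly ?K) z = 0 \<longrightarrow> z \<in> \<real>)"
  proof (intro impI allI)
    fix z assume al: allr and z: "poly (cpoly ?K) z = 0"
    then have "z \<in> inverse ` {z. poly (cpoly ?J) z = 0}" using KR by blast
    then obtain y where "poly (cpoly ?J) y = 0" "z = inverse y" by blast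
    then show "z \<in> \<real>" using arJ al Reals_inverse by blast
  qed
  have sJ: "rsquarefree (cpoly ?J)" by (rule rsquarefree_card) (use J0 cJ dJ in auto)
  have sK: "rsquarefree (cpoly ?K)" by (rule rsquarefree_card) (use J0 cK dK in auto)
  show ?thesis using sJ sK rJ rK arJ arK by auto
qed

definition Dm :: "nat \<Rightarrow> (nat \<Rightarrow> real) \<Rightarrow> nat \<Rightarrow> real" where
  "Dm l f k = (\<Sum>i\<le>l. (-1) ^ i * real (l choose i) * f (k + i))"

lemma Dm_Suc: "Dm (Suc l) f k = Dm l f k - Dm l f (Suc k)"
proof -
  have S0: "Dm (Suc l) f k = f k + (\<Sum>i\<le>l. (-1) ^ Suc i * real (Suc l choose Suc i) * f (k + Suc i))"
    unfolding Dm_def by (subst sum.atMost_Suc_shift) simp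
  have S1: "(\<Sum>i\<le>l. (-1) ^ Suc i * real (Suc l choose Suc i) * f (k + Suc i))
      = (\<Sum>i\<le>l. (-1) ^ Suc i * real (l choose i) * f (k + Suc i)) + (\<Sum>i\<le>l. (-1) ^ Suc i * real (l choose Suc i) * f (k + Suc i))"
    by (simp add: sum.distrib[symmetric] algebra_simps)
  have S2: "(\<Sum>i\<le>l. (-1) ^ Suc i * real (l choose i) * f (k + Suc i)) = - Dm l f (Suc k)"
    by (simp add: Dm_def sum_negf[symmetric])
  have S3: "Dm l f k = f k + (\<Sum>i\<le>l. (-1) ^ Suc i * real (l choose Suc i) * f (k + Suc i))"
  proof -
    have "Dm l f k = (\<Sum>i\<le>Suc l. (-1) ^ i * real (l choose i) * f (k + i))"
      by (simp add: Dm_def)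
    also have "\<dots> = f k + (\<Sum>i\<le>l. (-1) ^ Suc i * real (l choose Suc i) * f (k + Suc i))"
      by (subst sum.atMost_Suc_shift) simp
    finally show ?thesis .
  qed
  show ?thesis using S0 S1 S2 S3 by simp
qed

lemma Dm_sum: "Dm l (\<lambda>j. \<Sum>t\<in>T. c t * g t j) k = (\<Sum>t\<in>T. c t * Dm l (g t) k)"
  unfolding Dm_def by (simp add: sum_distrib_left sum_distrib_right sum.swap[of _ T] ac_simps)

lemma Dm_diff: "Dm l (\<lambda>j. f j - g j) k = Dm l f k - Dm l g k"
  unfolding Dm_def by (simp add: sum_subtractf algebra_simps)

lemma pow_Suc_diff: "real (Suc j) ^ e - real j ^ e = (\<Sum>t<e. real (e choose t) * real j ^ t)"
proof -
  have "real (Suc j) ^ e = (real j + 1) ^ e" by (simp add: add.commute)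
  also have "\<dots> = (\<Sum>t\<le>e. real (e choose t) * real j ^ t)"
    using binomial_ring[of "real j" 1 e] by simp
  also have "\<dots> = (\<Sum>t<e. real (e choose t) * real j ^ t) + real j ^ e"
    by (simp add: lessThan_Suc_atMost[symmetric])
  finally show ?thesis by simp
qed

lemma Dm_pow: "e \<le> l \<Longrightarrow> Dm l (\<lambda>j. real j ^ e) k = (if e = l then (-1) ^ l * fact l else 0)"
proof (induction l arbitrary: e k)
  case 0
  then show ?case by (simp add: Dm_def)
next
  case (Suc l)
  have "Dm (Suc l) (\<lambda>j. real j ^ e) k = - Dm l (\<lambda>j. real (Suc j) ^ e - real j ^ e) k"
    by (simp add: Dm_Suc Dm_diff) (simp add: Dm_def)
  also have "\<dots> = - (\<Sum>t<e. real (e choose t) * Dm l (\<lambda>j. real j ^ t) k)"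
    by (simp only: pow_Suc_diff Dm_sum)
  also have "\<dots> = (if e = Suc l then (-1) ^ Suc l * fact (Suc l) else 0)"
  proof (cases "e = Suc l")
    case True
    have "(\<Sum>t<e. real (e choose t) * Dm l (\<lambda>j. real j ^ t) k) = (\<Sum>t\<in>{l}. real (e choose t) * Dm l (\<lambda>j. real j ^ t) k)"
      by (rule sum.mono_neutral_cong_right) (use True Suc.IH in auto)
    also have "\<dots> = real (Suc l) * ((-1) ^ l * fact l)" using True Suc.IH[of l] by simp
    finally show ?thesis using True by (simp add: algebra_simps)
  next
    case False
    then have "e \<le> l" using Suc.prems by simp
    have "(\<Sum>t<e. real (e choose t) * Dm l (\<lambda>j. real j ^ t) k) = 0"
      by (rule sum.neutral) (use \<open>e \<le> l\<close> Suc.IH in auto)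
    then show ?thesis using False by simp
  qed
  finally show ?case .
qed

lemma tendsto_coeff_pcompose:
  fixes q :: "nat \<Rightarrow> real poly"
  assumes "\<And>i. (\<lambda>n. coeff (q n) i) \<longlonglongrightarrow> coeff q0 i"
  shows "(\<lambda>n. coeff (pcompose p (q n)) e) \<longlonglongrightarrow> coeff (pcompose p q0) e"
proof (induction p arbitrary: e rule: pCons_induct)
  case 0
  then show ?case by simp
next
  case (pCons a p)
  have "coeff (pcompose (pCons a p) (q n)) e = coeff [:a:] e + (\<Sum>i\<le>e. coeff (q n) i * coeff (pcompose p (q n)) (e - i))" for n
    by (simp add: pcompose_pCons coeff_mult)
  moreover have "coeff (pcompose (pCons a p) q0) e = coeff [:a:] e + (\<Sum>i\<le>e. coeff q0 i * coeff (pcompose p q0) (e - i))"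
    by (simp add: pcompose_pCons coeff_mult)
  moreover have "(\<lambda>n. coeff [:a:] e + (\<Sum>i\<le>e. coeff (q n) i * coeff (pcompose p (q n)) (e - i))) \<longlonglongrightarrow>
                 coeff [:a:] e + (\<Sum>i\<le>e. coeff q0 i * coeff (pcompose p q0) (e - i))"
    by (intro tendsto_intros assms pCons.IH)
  ultimately show ?case by simp
qed

definition Et :: "nat \<Rightarrow> real poly" where
  "Et d = (\<Sum>t\<le>d. monom (1 / fact t) t)"

lemma poly_Et: "poly (Et d) y = (\<Sum>t\<le>d. y ^ t / fact t)"
  unfolding Et_def by (simp add: poly_sum poly_monom)

lemma degree_Et: "degree (Et d) \<le> d"
  unfolding Et_def by (rule degree_sum_le) (auto intro: order_trans[OF degree_monom_le])

definition gam :: "real \<Rightarrow> nat \<Rightarrow> real" where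
  "gam \<kappa> l = (if even l then \<kappa> ^ (l div 2) / fact (l div 2) else 0)"

lemma coeff_Tlim:
  assumes "l \<le> d"
  shows "coeff (pcompose (Et d) (monom \<kappa> 2)) l = gam \<kappa> l"
proof -
  let ?G = "(\<Sum>t\<le>d. monom (\<kappa> ^ t / fact t) (2 * t)) :: real poly"
  have "poly (pcompose (Et d) (monom \<kappa> 2)) x = poly ?G x" for x
    by (simp add: poly_pcompose poly_Et poly_sum poly_monom power_mult power_mult_distrib)
  then have eq: "pcompose (Et d) (monom \<kappa> 2) = ?G" by (simp add: poly_eq_poly_eq_iff[symmetric] fun_eq_iff)
  have "coeff ?G l = (\<Sum>t\<le>d. if 2 * t = l then \<kappa> ^ t / fact t else 0)"
    by (simp add: coeff_sum coeff_monom)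
  also have "\<dots> = gam \<kappa> l"
  proof (cases "even l")
    case True
    then obtain r where r: "l = 2 * r" by blast
    have "(\<Sum>t\<le>d. if 2 * t = l then \<kappa> ^ t / fact t else 0) = (\<Sum>t\<in>{r}. if 2 * t = l then \<kappa> ^ t / fact t else 0)"
      by (rule sum.mono_neutral_cong_right) (use r assms in auto)
    then show ?thesis using r by (simp add: gam_def)
  next
    case False
    then have "(\<Sum>t\<le>d. if 2 * t = l then \<kappa> ^ t / fact t else 0) = 0"
      by (intro sum.neutral) auto
    then show ?thesis using False by (simp add: gam_def)
  qed
  finally show ?thesis unfolding eq .
qed

lemma exp_rem: fixes y :: real shows "\<bar>exp y - (\<Sum>t\<le>d. y ^ t / fact t)\<bar> \<le> exp \<bar>y\<bar> * \<bar>y\<bar> ^ Suc d"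
proof -
  obtain t where t0: "\<bar>t\<bar> \<le> \<bar>y\<bar> \<and> exp y = (\<Sum>m<Suc d. y ^ m / fact m) + exp t / fact (Suc d) * y ^ Suc d"
    using Maclaurin_exp_le[of y "Suc d"] by (rule exE)
  note t = conjunct1[OF t0] conjunct2[OF t0]
  have "exp y - (\<Sum>t\<le>d. y ^ t / fact t) = exp t / fact (Suc d) * y ^ Suc d"
    using t(2) by (simp add: lessThan_Suc_atMost)
  moreover have "\<bar>exp t / fact (Suc d) * y ^ Suc d\<bar> \<le> exp \<bar>y\<bar> * \<bar>y\<bar> ^ Suc d"
  proof -
    define F :: real where "F = fact (Suc d)"
    have F1: "1 \<le> F" unfolding F_def by (rule fact_ge_1)
    have "exp t \<le> exp \<bar>y\<bar>" using t(1) by simp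
    moreover have "exp t / F \<le> exp t"
    proof -
      have "exp t \<le> exp t * F" using F1 by (simp add: mult_le_cancel_left1)
      then show ?thesis using F1 by (simp add: divide_le_eq)
    qed
    ultimately have le: "exp t / F \<le> exp \<bar>y\<bar>" by linarith
    have "\<bar>exp t / F * y ^ Suc d\<bar> = exp t / F * \<bar>y\<bar> ^ Suc d"
      using F1 by (simp add: abs_mult power_abs)
    also have "\<dots> \<le> exp \<bar>y\<bar> * \<bar>y\<bar> ^ Suc d"
      by (rule mult_right_mono[OF le]) simp
    finally show ?thesis unfolding F_def .
  qed
  ultimately show ?thesis by simp
qed

lemma exp_m1: fixes y :: real shows "\<bar>exp y - 1\<bar> \<le> exp \<bar>y\<bar> * \<bar>y\<bar>"
  using exp_rem[of y 0] by simp

lemma R_small: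
  fixes psi eps \<delta> :: "nat \<Rightarrow> real"
  assumes dpos: "\<And>n. \<delta> n > 0" and dlim: "\<delta> \<longlonglongrightarrow> 0"
    and psi: "(\<lambda>n. psi n / \<delta> n) \<longlonglongrightarrow> 0"
    and eps: "(\<lambda>n. eps n / \<delta> n ^ (m + 1)) \<longlonglongrightarrow> 0" and dm: "d \<le> m + 1"
  shows "(\<lambda>n. (exp (psi n + eps n) - (\<Sum>t\<le>d. psi n ^ t / fact t)) / \<delta> n ^ d) \<longlonglongrightarrow> 0"
proof -
  have psi0: "psi \<longlonglongrightarrow> 0"
  proof -
    have "(\<lambda>n. psi n / \<delta> n * \<delta> n) \<longlonglongrightarrow> 0 * 0" by (intro tendsto_intros psi dlim)
    then show ?thesis using dpos by (simp add: less_imp_neq[symmetric])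
  qed
  have eps0: "eps \<longlonglongrightarrow> 0"
  proof -
    have "(\<lambda>n. eps n / \<delta> n ^ (m + 1) * \<delta> n ^ (m + 1)) \<longlonglongrightarrow> 0 * 0 ^ (m + 1)" by (intro tendsto_intros eps dlim)
    then show ?thesis using dpos by (simp add: less_imp_neq[symmetric])
  qed
  have X2: "(\<lambda>n. (exp (psi n) - (\<Sum>t\<le>d. psi n ^ t / fact t)) / \<delta> n ^ d) \<longlonglongrightarrow> 0"
  proof (rule Lim_null_comparison)
    show "\<forall>\<^sub>F n in sequentially. norm ((exp (psi n) - (\<Sum>t\<le>d. psi n ^ t / fact t)) / \<delta> n ^ d)
        \<le> exp \<bar>psi n\<bar> * \<bar>psi n / \<delta> n\<bar> ^ Suc d * \<delta> n"
    proof (intro always_eventually allI)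
      fix n
      have dp: "\<delta> n > 0" by (rule dpos)
      have "norm ((exp (psi n) - (\<Sum>t\<le>d. psi n ^ t / fact t)) / \<delta> n ^ d)
          = \<bar>exp (psi n) - (\<Sum>t\<le>d. psi n ^ t / fact t)\<bar> / \<delta> n ^ d" using dp by (simp add: abs_divide)
      also have "\<dots> \<le> exp \<bar>psi n\<bar> * \<bar>psi n\<bar> ^ Suc d / \<delta> n ^ d"
        by (rule divide_right_mono[OF exp_rem]) (use dp in simp)
      also have "\<dots> = exp \<bar>psi n\<bar> * \<bar>psi n / \<delta> n\<bar> ^ Suc d * \<delta> n"
        using dp by (simp add: power_divide abs_divide field_simps)
      finally show "norm ((exp (psi n) - (\<Sum>t\<le>d. psi n ^ t / fact t)) / \<delta> n ^ d)
        \<le> exp \<bar>psi n\<bar> * \<bar>psi n / \<delta> n\<bar> ^ Suc d * \<delta> n" .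
    qed
    have "(\<lambda>n. exp \<bar>psi n\<bar> * \<bar>psi n / \<delta> n\<bar> ^ Suc d * \<delta> n) \<longlonglongrightarrow> exp \<bar>0\<bar> * \<bar>0\<bar> ^ Suc d * 0"
      by (intro tendsto_intros psi0 psi dlim)
    then show "(\<lambda>n. exp \<bar>psi n\<bar> * \<bar>psi n / \<delta> n\<bar> ^ Suc d * \<delta> n) \<longlonglongrightarrow> 0" by simp
  qed
  have X1: "(\<lambda>n. exp (psi n) * (exp (eps n) - 1) / \<delta> n ^ d) \<longlonglongrightarrow> 0"
  proof (rule Lim_null_comparison)
    show "\<forall>\<^sub>F n in sequentially. norm (exp (psi n) * (exp (eps n) - 1) / \<delta> n ^ d)
        \<le> exp (psi n) * exp \<bar>eps n\<bar> * \<bar>eps n / \<delta> n ^ (m + 1)\<bar> * \<delta> n ^ (m + 1 - d)"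
    proof (intro always_eventually allI)
      fix n
      have dp: "\<delta> n > 0" by (rule dpos)
      have "norm (exp (psi n) * (exp (eps n) - 1) / \<delta> n ^ d) = exp (psi n) * \<bar>exp (eps n) - 1\<bar> / \<delta> n ^ d"
        using dp by (simp add: abs_mult abs_divide)
      also have "\<dots> \<le> exp (psi n) * (exp \<bar>eps n\<bar> * \<bar>eps n\<bar>) / \<delta> n ^ d"
        by (intro divide_right_mono mult_left_mono exp_m1) (use dp in auto)
      also have "\<dots> = exp (psi n) * exp \<bar>eps n\<bar> * \<bar>eps n / \<delta> n ^ (m + 1)\<bar> * \<delta> n ^ (m + 1 - d)"
      proof -
        have "\<delta> n ^ (m + 1) = \<delta> n ^ d * \<delta> n ^ (m + 1 - d)" using dm by (simp add: power_add[symmetric])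
        then show ?thesis using dp by (simp add: abs_divide field_simps)
      qed
      finally show "norm (exp (psi n) * (exp (eps n) - 1) / \<delta> n ^ d)
        \<le> exp (psi n) * exp \<bar>eps n\<bar> * \<bar>eps n / \<delta> n ^ (m + 1)\<bar> * \<delta> n ^ (m + 1 - d)" .
    qed
    have "(\<lambda>n. exp (psi n) * exp \<bar>eps n\<bar> * \<bar>eps n / \<delta> n ^ (m + 1)\<bar> * \<delta> n ^ (m + 1 - d))
        \<longlonglongrightarrow> exp 0 * exp \<bar>0\<bar> * \<bar>0\<bar> * 0 ^ (m + 1 - d)"
      by (intro tendsto_intros psi0 eps0 eps dlim)
    then show "(\<lambda>n. exp (psi n) * exp \<bar>eps n\<bar> * \<bar>eps n / \<delta> n ^ (m + 1)\<bar> * \<delta> n ^ (m + 1 - d)) \<longlonglongrightarrow> 0"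
      by simp
  qed
  have "(\<lambda>n. exp (psi n) * (exp (eps n) - 1) / \<delta> n ^ d + (exp (psi n) - (\<Sum>t\<le>d. psi n ^ t / fact t)) / \<delta> n ^ d) \<longlonglongrightarrow> 0 + 0"
    by (intro tendsto_add X1 X2)
  moreover have "exp (psi n) * (exp (eps n) - 1) / \<delta> n ^ d + (exp (psi n) - (\<Sum>t\<le>d. psi n ^ t / fact t)) / \<delta> n ^ d
      = (exp (psi n + eps n) - (\<Sum>t\<le>d. psi n ^ t / fact t)) / \<delta> n ^ d" for n
    by (simp add: exp_add add_divide_distrib[symmetric] algebra_simps)
  ultimately show ?thesis by simp
qed

lemma Dm_add: "Dm l (\<lambda>j. f j + h j) k = Dm l f k + Dm l h k"
  unfolding Dm_def by (simp add: sum.distrib algebra_simps)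

lemma main_limit:
  fixes \<delta> :: "nat \<Rightarrow> real" and a :: "nat \<Rightarrow> nat \<Rightarrow> real" and g :: "nat \<Rightarrow> nat \<Rightarrow> real"
    and eps :: "nat \<Rightarrow> nat \<Rightarrow> real" and \<kappa> :: real
  assumes dpos: "\<And>n. \<delta> n > 0" and dlim: "\<delta> \<longlonglongrightarrow> 0"
    and glim: "\<And>k. k \<in> {3..m} \<Longrightarrow> (\<lambda>n. g k n / \<delta> n ^ k) \<longlonglongrightarrow> 0"
    and elim: "\<And>j. j \<le> m + 1 \<Longrightarrow> (\<lambda>n. eps n j / \<delta> n ^ (m + 1)) \<longlonglongrightarrow> 0"
    and aeq: "\<And>n j. a n j = exp (\<kappa> * \<delta> n ^ 2 * real j ^ 2 + (\<Sum>k=3..m. g k n * real j ^ k) + eps n j)"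
    and dm: "d \<le> m + 1" and kl: "k + l \<le> d"
  shows "(\<lambda>n. Dm l (a n) k / \<delta> n ^ l) \<longlonglongrightarrow> (-1) ^ l * fact l * gam \<kappa> l"
proof -
  define psi where "psi n j = \<kappa> * \<delta> n ^ 2 * real j ^ 2 + (\<Sum>k=3..m. g k n * real j ^ k)" for n j
  define Psi where "Psi n = monom \<kappa> 2 + (\<Sum>k=3..m. monom (g k n / \<delta> n ^ k) k)" for n
  have poly_Psi: "poly (Psi n) (\<delta> n * real j) = psi n j" for n j
  proof -
    have "(g k n / \<delta> n ^ k) * (\<delta> n * real j) ^ k = g k n * real j ^ k" for k
      using dpos[of n] by (simp add: power_mult_distrib)
    moreover have "\<delta> n \<noteq> 0" using dpos[of n] by simp
    ultimately show ?thesis unfolding Psi_def psi_def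
      by (simp add: poly_sum poly_monom power_mult_distrib)
  qed
  have cPsi: "(\<lambda>n. coeff (Psi n) i) \<longlonglongrightarrow> coeff (monom \<kappa> 2) i" for i
  proof -
    have "(\<lambda>n. coeff (monom \<kappa> 2) i + (\<Sum>k=3..m. if k = i then g k n / \<delta> n ^ k else 0))
        \<longlonglongrightarrow> coeff (monom \<kappa> 2) i + (\<Sum>k=3..m. 0)"
    proof (intro tendsto_add tendsto_const tendsto_sum)
      fix k assume k: "k \<in> {3..m}"
      show "(\<lambda>n. if k = i then g k n / \<delta> n ^ k else 0) \<longlonglongrightarrow> 0"
        using glim[OF k] by (cases "k = i") auto
    qed
    moreover have "coeff (Psi n) i = coeff (monom \<kappa> 2) i + (\<Sum>k=3..m. if k = i then g k n / \<delta> n ^ k else 0)" for n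
      unfolding Psi_def by (simp add: coeff_sum coeff_monom)
    ultimately show ?thesis by simp
  qed
  define T where "T n = pcompose (Et d) (Psi n)" for n
  define Tl where "Tl = pcompose (Et d) (monom \<kappa> 2)"
  have cT: "(\<lambda>n. coeff (T n) e) \<longlonglongrightarrow> coeff Tl e" for e
    unfolding T_def Tl_def by (rule tendsto_coeff_pcompose[OF cPsi])
  define N where "N = d * (m + 2)"
  have degPsi: "degree (Psi n) \<le> m + 2" for n
    unfolding Psi_def
    by (intro degree_add_le degree_sum_le) (auto intro: order_trans[OF degree_monom_le])
  have degT: "degree (T n) \<le> N" for n
  proof -
    have "degree (T n) \<le> degree (Et d) * degree (Psi n)" unfolding T_def by (rule degree_pcompose_le)
    also have "\<dots> \<le> d * (m + 2)" by (intro mult_mono degree_Et degPsi) auto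
    finally show ?thesis unfolding N_def .
  qed
  have polyT: "poly (T n) (\<delta> n * real j) = (\<Sum>t\<le>d. psi n j ^ t / fact t)" for n j
    unfolding T_def by (simp add: poly_pcompose poly_Psi poly_Et)
  have psid: "(\<lambda>n. psi n j / \<delta> n) \<longlonglongrightarrow> 0" for j
  proof -
    have eq: "psi n j / \<delta> n = \<kappa> * \<delta> n * real j ^ 2 + (\<Sum>k=3..m. (g k n / \<delta> n ^ k) * \<delta> n ^ (k - 1) * real j ^ k)" for n
    proof -
      have "g k n * real j ^ k / \<delta> n = (g k n / \<delta> n ^ k) * \<delta> n ^ (k - 1) * real j ^ k" if "k \<in> {3..m}" for k
      proof -
        have "\<delta> n ^ k = \<delta> n ^ (k - 1) * \<delta> n" using that by (simp add: power_eq_if)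
        then show ?thesis using dpos[of n] by (simp add: field_simps)
      qed
      then show ?thesis unfolding psi_def using dpos[of n]
        by (simp add: add_divide_distrib sum_divide_distrib power2_eq_square)
    qed
    have "(\<lambda>n. \<kappa> * \<delta> n * real j ^ 2 + (\<Sum>k=3..m. (g k n / \<delta> n ^ k) * \<delta> n ^ (k - 1) * real j ^ k))
        \<longlonglongrightarrow> \<kappa> * 0 * real j ^ 2 + (\<Sum>k=3..m. 0 * 0 ^ (k - 1) * real j ^ k)"
      by (intro tendsto_intros dlim glim) auto
    then show ?thesis unfolding eq by simp
  qed
  define R where "R n j = a n j - poly (T n) (\<delta> n * real j)" for n j
  have Rs: "(\<lambda>n. R n j / \<delta> n ^ d) \<longlonglongrightarrow> 0" if "j \<le> m + 1" for j
  proof -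
    have "(\<lambda>n. (exp (psi n j + eps n j) - (\<Sum>t\<le>d. psi n j ^ t / fact t)) / \<delta> n ^ d) \<longlonglongrightarrow> 0"
      by (rule R_small[OF dpos dlim psid elim[OF that] dm])
    moreover have "R n j = exp (psi n j + eps n j) - (\<Sum>t\<le>d. psi n j ^ t / fact t)" for n
      unfolding R_def polyT aeq psi_def by simp
    ultimately show ?thesis by simp
  qed
  have decomp: "a n j = (\<Sum>e\<le>N. (coeff (T n) e * \<delta> n ^ e) * real j ^ e) + R n j" for n j
  proof -
    have "poly (T n) (\<delta> n * real j) = (\<Sum>e\<le>N. coeff (T n) e * (\<delta> n * real j) ^ e)"
      by (rule poly_sumN[OF degT])
    then show ?thesis unfolding R_def by (simp add: power_mult_distrib mult.assoc)
  qed
  have Dsplit: "Dm l (a n) k / \<delta> n ^ l = (\<Sum>e\<le>N. coeff (T n) e * (if e < l then 0 else \<delta> n ^ (e - l)) * Dm l (\<lambda>j. real j ^ e) k)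
       + (\<Sum>i\<le>l. (-1) ^ i * real (l choose i) * (R n (k + i) / \<delta> n ^ d)) * \<delta> n ^ (d - l)" for n
  proof -
    have dp: "\<delta> n > 0" by (rule dpos)
    have "Dm l (a n) k = (\<Sum>e\<le>N. (coeff (T n) e * \<delta> n ^ e) * Dm l (\<lambda>j. real j ^ e) k) + Dm l (R n) k"
    proof -
      have "a n = (\<lambda>j. (\<Sum>e\<le>N. (coeff (T n) e * \<delta> n ^ e) * real j ^ e) + R n j)"
        using decomp by (simp add: fun_eq_iff)
      then show ?thesis by (simp only: Dm_add Dm_sum)
    qed
    moreover have "(coeff (T n) e * \<delta> n ^ e) * Dm l (\<lambda>j. real j ^ e) k / \<delta> n ^ l
        = coeff (T n) e * (if e < l then 0 else \<delta> n ^ (e - l)) * Dm l (\<lambda>j. real j ^ e) k" for e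
    proof (cases "e < l")
      case True
      then have "Dm l (\<lambda>j. real j ^ e) k = 0" using Dm_pow[of e l k] by simp
      then show ?thesis by simp
    next
      case False
      then have "\<delta> n ^ e = \<delta> n ^ (e - l) * \<delta> n ^ l" by (simp add: power_add[symmetric])
      then show ?thesis using False dp by simp
    qed
    moreover have "Dm l (R n) k / \<delta> n ^ l = (\<Sum>i\<le>l. (-1) ^ i * real (l choose i) * (R n (k + i) / \<delta> n ^ d)) * \<delta> n ^ (d - l)"
    proof -
      have dd: "\<delta> n ^ d = \<delta> n ^ l * \<delta> n ^ (d - l)" using kl by (simp add: power_add[symmetric])
      have "Dm l (R n) k / \<delta> n ^ l = (\<Sum>i\<le>l. (-1) ^ i * real (l choose i) * R n (k + i) / \<delta> n ^ l)"
        unfolding Dm_def by (rule sum_divide_distrib)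
      also have "\<dots> = (\<Sum>i\<le>l. (-1) ^ i * real (l choose i) * (R n (k + i) / \<delta> n ^ d) * \<delta> n ^ (d - l))"
      proof (rule sum.cong[OF refl])
        fix i
        show "(-1) ^ i * real (l choose i) * R n (k + i) / \<delta> n ^ l = (-1) ^ i * real (l choose i) * (R n (k + i) / \<delta> n ^ d) * \<delta> n ^ (d - l)"
          unfolding dd using dp by (simp add: field_simps)
      qed
      also have "\<dots> = (\<Sum>i\<le>l. (-1) ^ i * real (l choose i) * (R n (k + i) / \<delta> n ^ d)) * \<delta> n ^ (d - l)"
        by (rule sum_distrib_right[symmetric])
      finally show ?thesis .
    qed
    ultimately show ?thesis by (simp add: add_divide_distrib sum_divide_distrib)
  qed
  have L1: "(\<lambda>n. \<Sum>e\<le>N. coeff (T n) e * (if e < l then 0 else \<delta> n ^ (e - l)) * Dm l (\<lambda>j. real j ^ e) k)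
      \<longlonglongrightarrow> (\<Sum>e\<le>N. coeff Tl e * (if e < l then 0 else 0 ^ (e - l)) * Dm l (\<lambda>j. real j ^ e) k)"
  proof -
    have H: "(\<lambda>n. if e < l then 0 else \<delta> n ^ (e - l)) \<longlonglongrightarrow> (if e < l then 0 else 0 ^ (e - l))" for e
      by (cases "e < l") (simp_all add: tendsto_power[OF dlim])
    show ?thesis by (intro tendsto_sum tendsto_mult tendsto_const cT H)
  qed
  have "d \<le> d * (m + 2)" by simp
  then have lN: "l \<le> N" using kl unfolding N_def by linarith
  have V1: "(\<Sum>e\<le>N. coeff Tl e * (if e < l then 0 else 0 ^ (e - l)) * Dm l (\<lambda>j. real j ^ e) k)
      = (-1) ^ l * fact l * gam \<kappa> l"
  proof -
    have "(\<Sum>e\<le>N. coeff Tl e * (if e < l then 0 else 0 ^ (e - l)) * Dm l (\<lambda>j. real j ^ e) k)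
        = (\<Sum>e\<in>{l}. coeff Tl e * (if e < l then 0 else 0 ^ (e - l)) * Dm l (\<lambda>j. real j ^ e) k)"
      by (rule sum.mono_neutral_cong_right) (use lN in auto)
    also have "\<dots> = coeff Tl l * ((-1) ^ l * fact l)" using Dm_pow[of l l k] by simp
    also have "coeff Tl l = gam \<kappa> l" unfolding Tl_def by (rule coeff_Tlim) (use kl in simp)
    finally show ?thesis by simp
  qed
  have L2: "(\<lambda>n. (\<Sum>i\<le>l. (-1) ^ i * real (l choose i) * (R n (k + i) / \<delta> n ^ d)) * \<delta> n ^ (d - l))
      \<longlonglongrightarrow> (\<Sum>i\<le>l. (-1) ^ i * real (l choose i) * 0) * 0 ^ (d - l)"
  proof (intro tendsto_intros dlim)
    fix i assume "i \<in> {..l}"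
    then have "k + i \<le> m + 1" using kl dm by simp
    then show "(\<lambda>n. R n (k + i) / \<delta> n ^ d) \<longlonglongrightarrow> 0" by (rule Rs)
  qed
  have "(\<lambda>n. Dm l (a n) k / \<delta> n ^ l) \<longlonglongrightarrow> (-1) ^ l * fact l * gam \<kappa> l + 0"
    unfolding Dsplit using tendsto_add[OF L1 L2] V1 by simp
  then show ?thesis by simp
qed

lemma hc_gam:
  assumes "k \<le> d"
  shows "real (d choose k) * ((-1) ^ (d - k) * fact (d - k) * gam \<kappa> (d - k)) = hc \<kappa> d k"
proof (cases "even (d - k)")
  case False
  then show ?thesis by (simp add: gam_def hc_def)
next
  case True
  have b: "real (d choose k) = fact d / (fact k * fact (d - k))"
    using assms by (simp add: binomial_fact)
  have "real (d choose k) * ((-1) ^ (d - k) * fact (d - k) * gam \<kappa> (d - k))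
      = fact d / (fact k * fact (d - k)) * (fact (d - k) * (\<kappa> ^ ((d - k) div 2) / fact ((d - k) div 2)))"
    using True unfolding b by (simp add: gam_def)
  also have "\<dots> = \<kappa> ^ ((d - k) div 2) * fact d / (fact k * fact ((d - k) div 2))"
    by (simp add: field_simps)
  also have "\<dots> = hc \<kappa> d k" using True assms by (simp add: hc_def)
  finally show ?thesis .
qed

lemma Ecf_Dm: "Ecf \<alpha> A d n k = Dm (d - k) (aa \<alpha> A n) k"
  unfolding Ecf_def Dm_def ..

lemma Fp_limit:
  fixes \<delta> :: "nat \<Rightarrow> real" and g :: "nat \<Rightarrow> nat \<Rightarrow> real"
    and eps :: "nat \<Rightarrow> nat \<Rightarrow> real" and \<kappa> :: real
  assumes dpos: "\<And>n. \<delta> n > 0" and dlim: "\<delta> \<longlonglongrightarrow> 0"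
    and glim: "\<And>k. k \<in> {3..m} \<Longrightarrow> (\<lambda>n. g k n / \<delta> n ^ k) \<longlonglongrightarrow> 0"
    and elim: "\<And>j. j \<le> m + 1 \<Longrightarrow> (\<lambda>n. eps n j / \<delta> n ^ (m + 1)) \<longlonglongrightarrow> 0"
    and aeq: "\<And>n j. aa \<alpha> A n j = exp (\<kappa> * \<delta> n ^ 2 * real j ^ 2 + (\<Sum>k=3..m. g k n * real j ^ k) + eps n j)"
    and dm: "d \<le> m + 1"
  shows "(\<lambda>n. coeff (Fp \<alpha> A \<delta> d n) k) \<longlonglongrightarrow> coeff (Hq \<kappa> d) k"
proof (cases "k \<le> d")
  case False
  then show ?thesis by (simp add: coeff_Fp coeff_Hq hc_zero)
next
  case True
  have "(\<lambda>n. Dm (d - k) (aa \<alpha> A n) k / \<delta> n ^ (d - k)) \<longlonglongrightarrow> (-1) ^ (d - k) * fact (d - k) * gam \<kappa> (d - k)"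
    by (rule main_limit[OF dpos dlim glim elim aeq dm]) (use True in auto)
  then have "(\<lambda>n. real (d choose k) * (Dm (d - k) (aa \<alpha> A n) k / \<delta> n ^ (d - k)))
      \<longlonglongrightarrow> real (d choose k) * ((-1) ^ (d - k) * fact (d - k) * gam \<kappa> (d - k))"
    by (intro tendsto_intros)
  then show ?thesis using True by (simp add: coeff_Fp coeff_Hq hc_gam Ecf_Dm)
qed

lemma LC_equiv:
  fixes \<alpha> :: "nat \<Rightarrow> real"
  assumes "\<And>n. \<alpha> n > 0"
  shows "\<alpha> (n + 1) ^ 2 > \<alpha> n * \<alpha> (n + 2) \<longleftrightarrow> 2 * ln (\<alpha> (n + 1) / \<alpha> n) - ln (\<alpha> (n + 2) / \<alpha> n) > 0"
    and "\<alpha> (n + 1) ^ 2 < \<alpha> n * \<alpha> (n + 2) \<longleftrightarrow> 2 * ln (\<alpha> (n + 1) / \<alpha> n) - ln (\<alpha> (n + 2) / \<alpha> n) < 0"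
proof -
  have p: "\<alpha> n > 0" "\<alpha> (n+1) > 0" "\<alpha> (n+2) > 0" using assms by auto
  have L: "2 * ln (\<alpha> (n + 1) / \<alpha> n) - ln (\<alpha> (n + 2) / \<alpha> n) = ln (\<alpha> (n + 1) ^ 2) - ln (\<alpha> n * \<alpha> (n + 2))"
    using p by (simp add: ln_div ln_mult ln_realpow)
  have pp: "\<alpha> (n + 1) ^ 2 > 0" "\<alpha> n * \<alpha> (n + 2) > 0" using p by auto
  show "\<alpha> (n + 1) ^ 2 > \<alpha> n * \<alpha> (n + 2) \<longleftrightarrow> 2 * ln (\<alpha> (n + 1) / \<alpha> n) - ln (\<alpha> (n + 2) / \<alpha> n) > 0"
    unfolding L using ln_less_cancel_iff[OF pp(2) pp(1)] by linarith
  show "\<alpha> (n + 1) ^ 2 < \<alpha> n * \<alpha> (n + 2) \<longleftrightarrow> 2 * ln (\<alpha> (n + 1) / \<alpha> n) - ln (\<alpha> (n + 2) / \<alpha> n) < 0"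
    unfolding L using ln_less_cancel_iff[OF pp(1) pp(2)] by linarith
qed

theorem theorem1p7:
  fixes \<alpha> A \<delta> :: "nat \<Rightarrow> real" and m :: nat and \<kappa> :: real
  assumes "log_polynomial \<alpha> m A \<kappa> \<delta>"
  shows "(\<kappa> = -1 \<longrightarrow> (\<forall>\<^sub>F n in sequentially. \<alpha> (n + 1) ^ 2 > \<alpha> n * \<alpha> (n + 2)))
       \<and> (\<kappa> = 1 \<longrightarrow> (\<forall>\<^sub>F n in sequentially. \<alpha> (n + 1) ^ 2 < \<alpha> n * \<alpha> (n + 2)))
       \<and> (\<forall>d. 1 \<le> d \<and> d \<le> m + 1 \<longrightarrow>
            (\<forall>\<^sub>F n in sequentially.
               (\<forall>P \<in> {jensen_J \<alpha> d n, jensen_K \<alpha> d n}.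
                  rsquarefree (map_poly complex_of_real P) \<and>
                  (\<kappa> = -1 \<longrightarrow>
                     (\<forall>z. poly (map_poly complex_of_real P) z = 0 \<longrightarrow> z \<in> \<real>)) \<and>
                  (\<kappa> = 1 \<longrightarrow>
                     card {z. poly (map_poly complex_of_real P) z = 0 \<and> z \<in> \<real>}
                       = (if odd d then 1 else 0)))))"
proof -
  from assms[unfolded log_polynomial_def] obtain g :: "nat \<Rightarrow> nat \<Rightarrow> real" where
    m2: "m \<ge> 2" and kap: "\<kappa> \<in> {1, -1}" and apos: "\<And>n. \<alpha> n > 0" and dpos: "\<And>n. \<delta> n > 0"
    and dlim: "\<delta> \<longlonglongrightarrow> 0"
    and gO: "\<forall>k\<in>{3..m}. g k \<in> o[sequentially](\<lambda>n. \<delta> n ^ k)"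
    and eO: "\<forall>j\<in>{1..m+1}.
           (\<lambda>n. ln (\<alpha> (n + j) / \<alpha> n)
                 - (A n * real j + \<kappa> * \<delta> n ^ 2 * real j ^ 2
                    + (\<Sum>k=3..m. g k n * real j ^ k)))
           \<in> o[sequentially](\<lambda>n. \<delta> n ^ (m + 1))"
    by blast
  define eps where "eps n j = ln (\<alpha> (n + j) / \<alpha> n)
                 - (A n * real j + \<kappa> * \<delta> n ^ 2 * real j ^ 2 + (\<Sum>k=3..m. g k n * real j ^ k))" for n j
  have glim: "(\<lambda>n. g k n / \<delta> n ^ k) \<longlonglongrightarrow> 0" if "k \<in> {3..m}" for k
    using smalloD_tendsto[OF gO[rule_format, OF that]] .
  have elim: "(\<lambda>n. eps n j / \<delta> n ^ (m + 1)) \<longlonglongrightarrow> 0" if "j \<le> m + 1" for j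
  proof (cases "j = 0")
    case True
    have "eps n 0 = 0" for n
    proof -
      have "(\<Sum>k=3..m. g k n * real 0 ^ k) = 0" by (intro sum.neutral) auto
      then show ?thesis unfolding eps_def using apos[of n] by simp
    qed
    then show ?thesis using True by simp
  next
    case False
    then have "j \<in> {1..m+1}" using that by simp
    from smalloD_tendsto[OF eO[rule_format, OF this]] show ?thesis unfolding eps_def .
  qed
  have aeq: "aa \<alpha> A n j = exp (\<kappa> * \<delta> n ^ 2 * real j ^ 2 + (\<Sum>k=3..m. g k n * real j ^ k) + eps n j)" for n j
  proof -
    have r: "\<alpha> (n + j) / \<alpha> n > 0" using apos[of n] apos[of "n+j"] by simp
    have E: "\<kappa> * \<delta> n ^ 2 * real j ^ 2 + (\<Sum>k=3..m. g k n * real j ^ k) + eps n j = ln (\<alpha> (n + j) / \<alpha> n) + (- (A n * real j))"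
      unfolding eps_def by simp
    show ?thesis unfolding aa_def E exp_add exp_ln[OF r] ..
  qed
  have partI: "(\<lambda>n. (2 * ln (\<alpha> (n + 1) / \<alpha> n) - ln (\<alpha> (n + 2) / \<alpha> n)) / \<delta> n ^ 2) \<longlonglongrightarrow> -2 * \<kappa>"
  proof -
    have e: "ln (\<alpha> (n + j) / \<alpha> n) = A n * real j + \<kappa> * \<delta> n ^ 2 * real j ^ 2 + (\<Sum>k=3..m. g k n * real j ^ k) + eps n j" for n j
      unfolding eps_def by simp
    have eq: "(2 * ln (\<alpha> (n + 1) / \<alpha> n) - ln (\<alpha> (n + 2) / \<alpha> n)) / \<delta> n ^ 2
       = -2 * \<kappa> + (\<Sum>k=3..m. (g k n / \<delta> n ^ k) * \<delta> n ^ (k - 2) * (2 - 2 ^ k))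
         + (2 * (eps n 1 / \<delta> n ^ (m + 1)) - eps n 2 / \<delta> n ^ (m + 1)) * \<delta> n ^ (m - 1)" for n
    proof -
      have dp: "\<delta> n > 0" by (rule dpos)
      have s: "(g k n / \<delta> n ^ k) * \<delta> n ^ (k - 2) * (2 - 2 ^ k) = (2 * g k n - g k n * 2 ^ k) / \<delta> n ^ 2"
        if "k \<in> {3..m}" for k
      proof -
        have "k = (k - 2) + 2" using that by (simp only: atLeastAtMost_iff) arith
        then have "\<delta> n ^ k = \<delta> n ^ ((k - 2) + 2)" by simp
        also have "\<dots> = \<delta> n ^ (k - 2) * \<delta> n ^ 2" by (rule power_add)
        finally have "\<delta> n ^ k = \<delta> n ^ (k - 2) * \<delta> n ^ 2" .
        then show ?thesis using dp by (simp add: field_simps)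
      qed
      have t: "(2 * (eps n 1 / \<delta> n ^ (m + 1)) - eps n 2 / \<delta> n ^ (m + 1)) * \<delta> n ^ (m - 1)
          = (2 * eps n 1 - eps n 2) / \<delta> n ^ 2"
      proof -
        have "\<delta> n ^ (m + 1) = \<delta> n ^ (m - 1) * \<delta> n ^ 2" using m2 by (simp add: power_add[symmetric])
        then show ?thesis using dp by (simp add: field_simps)
      qed
      have "(\<Sum>k=3..m. (g k n / \<delta> n ^ k) * \<delta> n ^ (k - 2) * (2 - 2 ^ k)) = (\<Sum>k=3..m. (2 * g k n - g k n * 2 ^ k) / \<delta> n ^ 2)"
        by (rule sum.cong[OF refl]) (rule s)
      also have "\<dots> = (2 * (\<Sum>k=3..m. g k n) - (\<Sum>k=3..m. g k n * 2 ^ k)) / \<delta> n ^ 2"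
        by (simp add: sum_divide_distrib[symmetric] sum_subtractf sum_distrib_left)
      finally have S: "(\<Sum>k=3..m. (g k n / \<delta> n ^ k) * \<delta> n ^ (k - 2) * (2 - 2 ^ k)) = (2 * (\<Sum>k=3..m. g k n) - (\<Sum>k=3..m. g k n * 2 ^ k)) / \<delta> n ^ 2" .
      show ?thesis unfolding S t e using dp by (simp add: field_simps)
    qed
    have "(\<lambda>n. -2 * \<kappa> + (\<Sum>k=3..m. (g k n / \<delta> n ^ k) * \<delta> n ^ (k - 2) * (2 - 2 ^ k))
         + (2 * (eps n 1 / \<delta> n ^ (m + 1)) - eps n 2 / \<delta> n ^ (m + 1)) * \<delta> n ^ (m - 1))
       \<longlonglongrightarrow> -2 * \<kappa> + (\<Sum>k=3..m. 0 * 0 ^ (k - 2) * (2 - 2 ^ k)) + (2 * 0 - 0) * 0 ^ (m - 1)"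
      by (intro tendsto_intros glim elim dlim) (use m2 in auto)
    moreover have "(\<Sum>k=3..m. 0 * 0 ^ (k - 2) * (2 - 2 ^ k)) = (0::real)" by simp
    moreover have "(0::real) ^ (m - 1) = 0" using m2 by simp
    ultimately show ?thesis unfolding eq by simp
  qed
  have i1: "\<kappa> = -1 \<longrightarrow> (\<forall>\<^sub>F n in sequentially. \<alpha> (n + 1) ^ 2 > \<alpha> n * \<alpha> (n + 2))"
  proof
    assume k: "\<kappa> = -1"
    have "\<forall>\<^sub>F n in sequentially. (2 * ln (\<alpha> (n + 1) / \<alpha> n) - ln (\<alpha> (n + 2) / \<alpha> n)) / \<delta> n ^ 2 > 0"
      by (rule order_tendstoD(1)[OF partI]) (use k in simp)
    then show "\<forall>\<^sub>F n in sequentially. \<alpha> (n + 1) ^ 2 > \<alpha> n * \<alpha> (n + 2)"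
    proof eventually_elim
      case (elim n)
      then have "2 * ln (\<alpha> (n + 1) / \<alpha> n) - ln (\<alpha> (n + 2) / \<alpha> n) > 0"
        using dpos[of n] by (simp add: zero_less_divide_iff)
      then show ?case using LC_equiv(1)[of \<alpha> n, OF apos] by blast
    qed
  qed
  have i2: "\<kappa> = 1 \<longrightarrow> (\<forall>\<^sub>F n in sequentially. \<alpha> (n + 1) ^ 2 < \<alpha> n * \<alpha> (n + 2))"
  proof
    assume k: "\<kappa> = 1"
    have "\<forall>\<^sub>F n in sequentially. (2 * ln (\<alpha> (n + 1) / \<alpha> n) - ln (\<alpha> (n + 2) / \<alpha> n)) / \<delta> n ^ 2 < 0"
      by (rule order_tendstoD(2)[OF partI]) (use k in simp)
    then show "\<forall>\<^sub>F n in sequentially. \<alpha> (n + 1) ^ 2 < \<alpha> n * \<alpha> (n + 2)"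
    proof eventually_elim
      case (elim n)
      then have "2 * ln (\<alpha> (n + 1) / \<alpha> n) - ln (\<alpha> (n + 2) / \<alpha> n) < 0"
        using dpos[of n] by (simp add: divide_less_0_iff)
      then show ?case using LC_equiv(2)[of \<alpha> n, OF apos] by blast
    qed
  qed
  have ii: "\<forall>\<^sub>F n in sequentially.
               (\<forall>P \<in> {jensen_J \<alpha> d n, jensen_K \<alpha> d n}.
                  rsquarefree (map_poly complex_of_real P) \<and>
                  (\<kappa> = -1 \<longrightarrow>
                     (\<forall>z. poly (map_poly complex_of_real P) z = 0 \<longrightarrow> z \<in> \<real>)) \<and>
                  (\<kappa> = 1 \<longrightarrow>
                     card {z. poly (map_poly complex_of_real P) z = 0 \<and> z \<in> \<real>}
                       = (if odd d then 1 else 0)))"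
    if d: "1 \<le> d" "d \<le> m + 1" for d
  proof -
    let ?Q = "Hq \<kappa> d"
    have lim: "\<And>k. (\<lambda>n. coeff (Fp \<alpha> A \<delta> d n) k) \<longlonglongrightarrow> coeff ?Q k"
      by (rule Fp_limit[OF dpos dlim glim elim aeq d(2)])
    have cQ: "card {z. poly (cpoly ?Q) z = 0} = d"
    proof -
      have "\<kappa> = 1 \<or> \<kappa> = -1" using kap by simp
      then show ?thesis
      proof
        assume "\<kappa> = 1" then show ?thesis using conjunct1[OF Hp_props[of d]] by simp
      next
        assume "\<kappa> = -1" then show ?thesis using conjunct1[OF Hm_props[of d]] by simp
      qed
    qed
    have ev: "\<forall>\<^sub>F n in sequentially. Fp \<alpha> A \<delta> d n \<noteq> 0 \<and> degree (Fp \<alpha> A \<delta> d n) = d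
      \<and> card {z. poly (cpoly (Fp \<alpha> A \<delta> d n)) z = 0} = d
      \<and> card {z. poly (cpoly (Fp \<alpha> A \<delta> d n)) z = 0 \<and> z \<in> \<real>} = card {z. poly (cpoly ?Q) z = 0 \<and> z \<in> \<real>}
      \<and> ((\<forall>z. poly (cpoly ?Q) z = 0 \<longrightarrow> z \<in> \<real>) \<longrightarrow> (\<forall>z. poly (cpoly (Fp \<alpha> A \<delta> d n)) z = 0 \<longrightarrow> z \<in> \<real>))"
      by (rule root_perturb[OF degree_Hq d(1) cQ degree_Fp lim])
    then show ?thesis
    proof eventually_elim
      case (elim n)
      have T: "\<forall>P \<in> {jensen_J \<alpha> d n, jensen_K \<alpha> d n}.
           rsquarefree (cpoly P) \<and> card {z. poly (cpoly P) z = 0 \<and> z \<in> \<real>} = card {z. poly (cpoly ?Q) z = 0 \<and> z \<in> \<real>} \<and>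
           ((\<forall>z. poly (cpoly ?Q) z = 0 \<longrightarrow> z \<in> \<real>) \<longrightarrow> (\<forall>z. poly (cpoly P) z = 0 \<longrightarrow> z \<in> \<real>))"
        by (rule jensen_transfer[OF apos dpos]) (use elim in auto)
      have m1: "\<kappa> = -1 \<Longrightarrow> (\<forall>z. poly (cpoly ?Q) z = 0 \<longrightarrow> z \<in> \<real>)" using Hm_props[of d] by simp
      have p1: "\<kappa> = 1 \<Longrightarrow> card {z. poly (cpoly ?Q) z = 0 \<and> z \<in> \<real>} = (if odd d then 1 else 0)"
        using Hp_props[of d] by simp
      show ?case
      proof (intro ballI conjI impI)
        fix P assume P: "P \<in> {jensen_J \<alpha> d n, jensen_K \<alpha> d n}"
        note TP = bspec[OF T P]
        show "rsquarefree (cpoly P)" using TP by (rule conjunct1)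
        show "\<forall>z. poly (cpoly P) z = 0 \<longrightarrow> z \<in> \<real>" if "\<kappa> = -1"
          using conjunct2[OF conjunct2[OF TP]] m1[OF that] by (rule mp)
        show "card {z. poly (cpoly P) z = 0 \<and> z \<in> \<real>} = (if odd d then 1 else 0)" if "\<kappa> = 1"
          using conjunct1[OF conjunct2[OF TP]] p1[OF that] by (rule trans)
      qed
    qed
  qed
  show ?thesis using i1 i2 ii by (intro conjI allI impI) auto
qed

end
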